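(* Let $n$ be a positive integer, let $L/K_P$ be a finite extension, and let $\alpha\in K_P^+$ satisfy $v_L(\alpha)\in n\mathbb{Z}$. Then there exists a finite purely inseparable extension $L_1/L$ such that the unique $n$-th root $\alpha^{1/n}\in\mathbb{C}_P^+$ lies in $L_1^+$.
   Context: $X$ is a smooth projective curve over a finite field of characteristic $p$, $P$ a closed point, $K_P$ the completion of its function field at $P$, $\mathbb{C}_P$ the completion of an algebraic closure of $K_P$; all extensions of $K_P$ lie in $\mathbb{C}_P$. For a complete extension $L$ of $K_P$, $\mu_L$ denotes the roots of unity in $L$ and $L^+=L^\times/\mu_L$ is the group of positive numbers; for $L'\subseteq L$ one has $L'^+\subseteq L^+\subseteq\mathbb{C}_P^+$. The group $\mathbb{C}_P^+$ is uniquely divisible. For $L/K_P$ finite, $v_L=e_{L/K_P}v_P$ is the normalized valuation of $L$ (extended to $\mathbb{C}_P$), which is well defined on positive numbers. *)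

theory Defs
  imports "HOL-Computational_Algebra.Primes" "HOL-Algebra.Algebraic_Closure" "HOL-Algebra.Finite_Extensions" "HOL-Algebra.Embedded_Algebras"
begin

text \<open>Ambient field R plays the role of C_P, with an additive valuation
  v (only meaningful on nonzero elements), normalized later so that v(K_P^x) = Z.\<close>

definition is_valuation :: "('a, 'b) ring_scheme \<Rightarrow> ('a \<Rightarrow> real) \<Rightarrow> bool" where
  "is_valuation R v \<longleftrightarrow>
     (\<forall>x \<in> carrier R - {\<zero>\<^bsub>R\<^esub>}. \<forall>y \<in> carrier R - {\<zero>\<^bsub>R\<^esub>}.
        v (x \<otimes>\<^bsub>R\<^esub> y) = v x + v y \<and>
        (x \<oplus>\<^bsub>R\<^esub> y \<noteq> \<zero>\<^bsub>R\<^esub> \<longrightarrow> v (x \<oplus>\<^bsub>R\<^esub> y) \<ge> min (v x) (v y)))"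

text \<open>x is close to y: distance at most exp(-M), i.e. x = y or v(x - y) >= M.\<close>
definition vclose :: "('a, 'b) ring_scheme \<Rightarrow> ('a \<Rightarrow> real) \<Rightarrow> real \<Rightarrow> 'a \<Rightarrow> 'a \<Rightarrow> bool" where
  "vclose R v M x y \<longleftrightarrow> x = y \<or> v (x \<ominus>\<^bsub>R\<^esub> y) \<ge> M"

definition vcauchy :: "('a, 'b) ring_scheme \<Rightarrow> ('a \<Rightarrow> real) \<Rightarrow> (nat \<Rightarrow> 'a) \<Rightarrow> bool" where
  "vcauchy R v f \<longleftrightarrow> (\<forall>M. \<exists>N. \<forall>m\<ge>N. \<forall>n\<ge>N. vclose R v M (f m) (f n))"

definition vconverges :: "('a, 'b) ring_scheme \<Rightarrow> ('a \<Rightarrow> real) \<Rightarrow> (nat \<Rightarrow> 'a) \<Rightarrow> 'a \<Rightarrow> bool" where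
  "vconverges R v f x \<longleftrightarrow> (\<forall>M. \<exists>N. \<forall>n\<ge>N. vclose R v M (f n) x)"

definition vcomplete :: "('a, 'b) ring_scheme \<Rightarrow> ('a \<Rightarrow> real) \<Rightarrow> 'a set \<Rightarrow> bool" where
  "vcomplete R v S \<longleftrightarrow>
     (\<forall>f. (\<forall>n. f n \<in> S) \<and> vcauchy R v f \<longrightarrow> (\<exists>x \<in> S. vconverges R v f x))"

definition vdense :: "('a, 'b) ring_scheme \<Rightarrow> ('a \<Rightarrow> real) \<Rightarrow> 'a set \<Rightarrow> 'a set \<Rightarrow> bool" where
  "vdense R v D S \<longleftrightarrow> (\<forall>x \<in> S. \<forall>M. \<exists>y \<in> D. vclose R v M y x)"

definition finite_residue_field :: "('a, 'b) ring_scheme \<Rightarrow> ('a \<Rightarrow> real) \<Rightarrow> 'a set \<Rightarrow> bool" where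
  "finite_residue_field R v K \<longleftrightarrow>
     (\<exists>F. finite F \<and> F \<subseteq> K \<and>
        (\<forall>x \<in> K. (x = \<zero>\<^bsub>R\<^esub> \<or> v x \<ge> 0) \<longrightarrow>
           (\<exists>s \<in> F. x = s \<or> v (x \<ominus>\<^bsub>R\<^esub> s) > 0)))"

text \<open>Standing setup: R = C_P (algebraically closed, complete, of characteristic p,
  the completion of the algebraic closure of K = K_P), K = K_P a local field of
  characteristic p (complete, discretely valued with v normalized so v(K^x) = Z,
  finite residue field). Such K are exactly the completions K_P of function fields of
  smooth projective curves over finite fields at closed points.\<close>
definition CP_setup :: "('a, 'b) ring_scheme \<Rightarrow> ('a \<Rightarrow> real) \<Rightarrow> nat \<Rightarrow> 'a set \<Rightarrow> bool" where
  "CP_setup R v p K \<longleftrightarrow>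
     field R \<and> algebraically_closed R \<and> Factorial_Ring.prime p \<and> [p] \<cdot>\<^bsub>R\<^esub> \<one>\<^bsub>R\<^esub> = \<zero>\<^bsub>R\<^esub> \<and>
     is_valuation R v \<and> vcomplete R v (carrier R) \<and>
     subfield K R \<and> v ` (K - {\<zero>\<^bsub>R\<^esub>}) = range real_of_int \<and>
     vcomplete R v K \<and> finite_residue_field R v K \<and>
     vdense R v {x \<in> carrier R. \<not> ring.transcendental R K x} (carrier R)"

definition finite_ext :: "('a, 'b) ring_scheme \<Rightarrow> 'a set \<Rightarrow> 'a set \<Rightarrow> bool" where
  "finite_ext R K L \<longleftrightarrow> subfield L R \<and> K \<subseteq> L \<and> ring.finite_dimension R K L"

definition purely_insep_finite_ext :: "('a, 'b) ring_scheme \<Rightarrow> nat \<Rightarrow> 'a set \<Rightarrow> 'a set \<Rightarrow> bool" where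
  "purely_insep_finite_ext R p L L1 \<longleftrightarrow>
     finite_ext R L L1 \<and> (\<forall>x \<in> L1. \<exists>k::nat. x [^]\<^bsub>R\<^esub> (p ^ k) \<in> L)"

definition ram_index :: "('a, 'b) ring_scheme \<Rightarrow> ('a \<Rightarrow> real) \<Rightarrow> 'a set \<Rightarrow> nat" where
  "ram_index R v L = (THE e::nat. e > 0 \<and>
       v ` (L - {\<zero>\<^bsub>R\<^esub>}) = {real_of_int k / real e | k. True})"

definition vL :: "('a, 'b) ring_scheme \<Rightarrow> ('a \<Rightarrow> real) \<Rightarrow> 'a set \<Rightarrow> 'a \<Rightarrow> real" where
  "vL R v L x = real (ram_index R v L) * v x"

definition root_of_unity :: "('a, 'b) ring_scheme \<Rightarrow> 'a \<Rightarrow> bool" where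
  "root_of_unity R z \<longleftrightarrow> z \<in> carrier R \<and> (\<exists>m::nat. m > 0 \<and> z [^]\<^bsub>R\<^esub> m = \<one>\<^bsub>R\<^esub>)"

text \<open>The positive number (element of C_P^+ = C_P^x / mu) represented by x.\<close>
definition pos_class :: "('a, 'b) ring_scheme \<Rightarrow> 'a \<Rightarrow> 'a set" where
  "pos_class R x = {y \<in> carrier R - {\<zero>\<^bsub>R\<^esub>}. root_of_unity R (y \<otimes>\<^bsub>R\<^esub> inv\<^bsub>R\<^esub> x)}"

end

theory Submission imports Defs begin

lemma exists_pow_cong1:
  fixes a M :: nat assumes cop: "coprime a M" and M: "M > 0" and a: "a > 0"
  shows "\<exists>f>0. M dvd (a ^ f - 1)"
proof -
  define g where "g = (\<lambda>i::nat. a ^ i mod M)"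
  have "\<not> inj_on g {0..M}"
  proof
    assume "inj_on g {0..M}"
    moreover have "g ` {0..M} \<subseteq> {0..<M}" unfolding g_def using M by auto
    ultimately have "card {0..M} \<le> card {0..<M}" using card_inj_on_le by blast
    then show False by simp
  qed
  then obtain i j where ij: "i \<in> {0..M}" "j \<in> {0..M}" "i \<noteq> j" "g i = g j" unfolding inj_on_def by blast
  have gen: "\<exists>f>0. M dvd (a ^ f - 1)" if "i < j" "g i = g j" for i j
  proof -
    have le: "a ^ i \<le> a ^ j" using that a by (simp add: power_increasing)
    have "a ^ j mod M = a ^ i mod M" using that unfolding g_def by simp
    then have "M dvd (a ^ j - a ^ i)" using mod_eq_dvd_iff_nat[OF le] by blast
    moreover have "a ^ j - a ^ i = a ^ i * (a ^ (j - i) - 1)"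
      using that by (simp add: diff_mult_distrib2 power_add[symmetric])
    ultimately have "M dvd a ^ i * (a ^ (j - i) - 1)" by simp
    moreover have "coprime M (a ^ i)" using cop by (simp add: coprime_commute)
    ultimately have "M dvd (a ^ (j - i) - 1)" using coprime_dvd_mult_right_iff by blast
    then show ?thesis using that by (intro exI[of _ "j - i"]) auto
  qed
  show ?thesis
  proof (cases "i < j")
    case True then show ?thesis using gen ij by blast
  next
    case False then have "j < i" using ij by simp
    then show ?thesis using gen ij by metis
  qed
qed

lemma pfactor: fixes p N :: nat assumes "N > 0" "p > 1" shows "\<exists>r N'. N = p ^ r * N' \<and> \<not> p dvd N'"
  using assms
proof (induct N rule: less_induct)
  case (less N)
  show ?case
  proof (cases "p dvd N")
    case True
    then obtain N1 where N1: "N = p * N1" by auto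
    have "N1 < N" "N1 > 0" using N1 less.prems by auto
    then obtain r N' where "N1 = p ^ r * N'" "\<not> p dvd N'" using less.hyps less.prems by blast
    then show ?thesis using N1 by (intro exI[of _ "Suc r"] exI[of _ N']) auto
  next
    case False then show ?thesis by (intro exI[of _ 0] exI[of _ N]) auto
  qed
qed

locale cpl = field R for R (structure) +
  fixes v :: "'a \<Rightarrow> real" and p :: nat and K :: "'a set"
  assumes cp: "CP_setup R v p K"
begin

lemma isval: "is_valuation R v" using cp unfolding CP_setup_def by auto
lemma complR: "vcomplete R v (carrier R)" using cp unfolding CP_setup_def by auto
lemma subK: "subfield K R" using cp unfolding CP_setup_def by auto
lemma valK: "v ` (K - {\<zero>}) = range real_of_int" using cp unfolding CP_setup_def by auto
lemma complK: "vcomplete R v K" using cp unfolding CP_setup_def by auto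
lemma resK: "finite_residue_field R v K" using cp unfolding CP_setup_def by auto
lemma algc: "algebraically_closed R" using cp unfolding CP_setup_def by auto
lemma primep: "Factorial_Ring.prime p" using cp unfolding CP_setup_def by auto
lemma charp: "[p] \<cdot> \<one> = \<zero>" using cp unfolding CP_setup_def by auto
lemma p_gt1: "p > 1" using prime_gt_1_nat[OF primep] by simp

lemma K_carr: "K \<subseteq> carrier R" using subK subfieldE(3) by blast

lemma vmult: "x \<in> carrier R \<Longrightarrow> y \<in> carrier R \<Longrightarrow> x \<noteq> \<zero> \<Longrightarrow> y \<noteq> \<zero> \<Longrightarrow> v (x \<otimes> y) = v x + v y"
  using isval unfolding is_valuation_def by auto

lemma vaddm: "x \<in> carrier R \<Longrightarrow> y \<in> carrier R \<Longrightarrow> x \<noteq> \<zero> \<Longrightarrow> y \<noteq> \<zero> \<Longrightarrow> x \<oplus> y \<noteq> \<zero> \<Longrightarrow> v (x \<oplus> y) \<ge> min (v x) (v y)"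
  using isval unfolding is_valuation_def by auto

lemma nz_mult: "x \<in> carrier R \<Longrightarrow> y \<in> carrier R \<Longrightarrow> x \<noteq> \<zero> \<Longrightarrow> y \<noteq> \<zero> \<Longrightarrow> x \<otimes> y \<noteq> \<zero>"
  using integral by blast

lemma v_one: "v \<one> = 0"
  using vmult[of \<one> \<one>] by simp

lemma v_neg: assumes "x \<in> carrier R" "x \<noteq> \<zero>" shows "v (\<ominus> x) = v x"
proof -
  have m1: "(\<ominus> \<one>) \<otimes> (\<ominus> \<one>) = \<one>" by algebra
  have "\<ominus> \<one> \<noteq> \<zero>" by (metis m1 l_null one_closed a_inv_closed zero_not_one)
  then have "v (\<ominus> \<one>) + v (\<ominus> \<one>) = 0" using vmult[of "\<ominus> \<one>" "\<ominus> \<one>"] m1 v_one by simp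
  then have "v (\<ominus> \<one>) = 0" by simp
  moreover have "\<ominus> x = (\<ominus> \<one>) \<otimes> x" using assms by algebra
  ultimately show ?thesis using vmult[of "\<ominus> \<one>" x] assms \<open>\<ominus> \<one> \<noteq> \<zero>\<close> by simp
qed

lemma inv_nz: "x \<in> carrier R \<Longrightarrow> x \<noteq> \<zero> \<Longrightarrow> inv x \<in> carrier R \<and> inv x \<noteq> \<zero> \<and> inv x \<otimes> x = \<one> \<and> x \<otimes> inv x = \<one>"
  by (metis Diff_iff empty_iff field_Units insert_iff Units_inv_closed Units_l_inv Units_r_inv l_null one_not_zero Units_closed)

lemma v_inv: assumes "x \<in> carrier R" "x \<noteq> \<zero>" shows "v (inv x) = - v x"
  using vmult[of "inv x" x] inv_nz[OF assms] assms v_one by simp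

lemma pow_nz: "x \<in> carrier R \<Longrightarrow> x \<noteq> \<zero> \<Longrightarrow> x [^] (n::nat) \<noteq> \<zero>"
  by (induct n) (auto simp: nz_mult)

lemma v_pow: assumes "x \<in> carrier R" "x \<noteq> \<zero>" shows "v (x [^] (n::nat)) = real n * v x"
proof (induct n)
  case 0 then show ?case using v_one by simp
next
  case (Suc n)
  have "x [^] Suc n = x [^] n \<otimes> x" by simp
  then show ?case using vmult[of "x [^] n" x] Suc assms pow_nz by (simp add: algebra_simps)
qed

lemma minus_self: "x \<in> carrier R \<Longrightarrow> x \<ominus> x = \<zero>" by (simp add: r_right_minus_eq)

definition vge :: "'a \<Rightarrow> real \<Rightarrow> bool" where
  "vge x M \<longleftrightarrow> x = \<zero> \<or> v x \<ge> M"

lemma vge_zero[simp]: "vge \<zero> M" by (simp add: vge_def)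

lemma vge_mono: "vge x M \<Longrightarrow> M' \<le> M \<Longrightarrow> vge x M'" by (auto simp: vge_def)

lemma vge_add: assumes "x \<in> carrier R" "y \<in> carrier R" "vge x M" "vge y M" shows "vge (x \<oplus> y) M"
  using assms vaddm[of x y] unfolding vge_def by (cases "x = \<zero>"; cases "y = \<zero>"; force)

lemma vge_neg: assumes "x \<in> carrier R" shows "vge (\<ominus> x) M \<longleftrightarrow> vge x M"
  using assms v_neg[of x] unfolding vge_def by (metis a_inv_closed add.inv_eq_1_iff v_neg)

lemma vge_sub: assumes "x \<in> carrier R" "y \<in> carrier R" "vge x M" "vge y M" shows "vge (x \<ominus> y) M"
  using vge_add[of x "\<ominus> y" M] vge_neg[of y M] assms by (simp add: minus_eq r_neg)

lemma vge_mult: assumes "x \<in> carrier R" "y \<in> carrier R" "vge x M1" "vge y M2" shows "vge (x \<otimes> y) (M1 + M2)"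
  using assms vmult[of x y] unfolding vge_def by (cases "x = \<zero>"; cases "y = \<zero>"; auto)

lemma vge_mult_v: assumes "x \<in> carrier R" "y \<in> carrier R" "y \<noteq> \<zero>" "vge x M" shows "vge (x \<otimes> y) (M + v y)"
  using vge_mult[OF assms(1,2,4), of "v y"] assms unfolding vge_def by auto

lemma vge_swap: assumes "x \<in> carrier R" "y \<in> carrier R" shows "vge (x \<ominus> y) M \<longleftrightarrow> vge (y \<ominus> x) M"
proof -
  have "y \<ominus> x = \<ominus> (x \<ominus> y)" using assms by algebra
  then show ?thesis using vge_neg[of "x \<ominus> y" M] assms by simp
qed

lemma vge_trans: assumes "x \<in> carrier R" "y \<in> carrier R" "z \<in> carrier R" "vge (x \<ominus> y) M" "vge (y \<ominus> z) M"
  shows "vge (x \<ominus> z) M"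
proof -
  have "x \<ominus> z = (x \<ominus> y) \<oplus> (y \<ominus> z)" using assms by algebra
  then show ?thesis using vge_add[of "x \<ominus> y" "y \<ominus> z" M] assms by simp
qed

lemma vclose_iff: "x \<in> carrier R \<Longrightarrow> y \<in> carrier R \<Longrightarrow> vclose R v M x y \<longleftrightarrow> vge (x \<ominus> y) M"
  unfolding vclose_def vge_def using r_right_minus_eq by auto

lemma v_strict: assumes "x \<in> carrier R" "y \<in> carrier R" "x \<noteq> \<zero>" "y \<noteq> \<zero>" "v x < v y"
  shows "x \<oplus> y \<noteq> \<zero> \<and> v (x \<oplus> y) = v x"
proof -
  have ne: "x \<oplus> y \<noteq> \<zero>"
  proof
    assume "x \<oplus> y = \<zero>"
    then have "y = \<ominus> x" using assms by (metis add.inv_closed a_comm l_neg minus_equality)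
    then show False using v_neg[of x] assms by simp
  qed
  have "x = (x \<oplus> y) \<oplus> (\<ominus> y)" using assms by algebra
  then have "v x \<ge> min (v (x \<oplus> y)) (v (\<ominus> y))"
    using vaddm[of "x \<oplus> y" "\<ominus> y"] assms ne by (metis a_closed a_inv_closed add.inv_eq_1_iff)
  then have "v x \<ge> v (x \<oplus> y)" using v_neg[of y] assms by auto
  moreover have "v (x \<oplus> y) \<ge> v x" using vaddm[of x y] assms ne by auto
  ultimately show ?thesis using ne by auto
qed

subsection \<open>Binomial theorem and Frobenius\<close>

fun bsum :: "(nat \<Rightarrow> 'a) \<Rightarrow> nat \<Rightarrow> 'a" where
  "bsum f 0 = f 0"
| "bsum f (Suc n) = bsum f n \<oplus> f (Suc n)"

lemma bsum_closed: "(\<And>k. f k \<in> carrier R) \<Longrightarrow> bsum f n \<in> carrier R"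
  by (induct n) auto

lemma bsum_add: "(\<And>k. f k \<in> carrier R) \<Longrightarrow> (\<And>k. g k \<in> carrier R) \<Longrightarrow>
   bsum (\<lambda>k. f k \<oplus> g k) n = bsum f n \<oplus> bsum g n"
proof (induct n)
  case 0 then show ?case by simp
next
  case (Suc n)
  have c: "bsum f n \<in> carrier R" "bsum g n \<in> carrier R" using Suc bsum_closed by auto
  show ?case using Suc c by (simp add: a_ac)
qed

lemma bsum_cmult: "(\<And>k. f k \<in> carrier R) \<Longrightarrow> c \<in> carrier R \<Longrightarrow>
   c \<otimes> bsum f n = bsum (\<lambda>k. c \<otimes> f k) n"
  by (induct n) (auto simp: r_distr bsum_closed)

lemma bsum_shift: "(\<And>k. f k \<in> carrier R) \<Longrightarrow> bsum f (Suc n) = f 0 \<oplus> bsum (\<lambda>k. f (Suc k)) n"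
proof (induct n)
  case 0 then show ?case by simp
next
  case (Suc n)
  have c: "bsum (\<lambda>k. f (Suc k)) n \<in> carrier R" using Suc bsum_closed by auto
  have "bsum f (Suc (Suc n)) = bsum f (Suc n) \<oplus> f (Suc (Suc n))" by simp
  also have "\<dots> = (f 0 \<oplus> bsum (\<lambda>k. f (Suc k)) n) \<oplus> f (Suc (Suc n))" using Suc by simp
  also have "\<dots> = f 0 \<oplus> bsum (\<lambda>k. f (Suc k)) (Suc n)" using Suc c by (simp add: a_assoc)
  finally show ?case .
qed

lemma bsum_cong: "(\<And>k. k \<le> n \<Longrightarrow> f k = g k) \<Longrightarrow> bsum f n = bsum g n"
  by (induct n) auto

lemma binomial:
  assumes x: "x \<in> carrier R" and y: "y \<in> carrier R"
  shows "(x \<oplus> y) [^] n = bsum (\<lambda>k. [(n choose k)] \<cdot> (x [^] k \<otimes> y [^] (n - k))) n"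
proof (induct n)
  case 0 then show ?case by simp
next
  case (Suc n)
  define f where "f = (\<lambda>k. [(n choose k)] \<cdot> (x [^] k \<otimes> y [^] (n - k)))"
  have fc: "\<And>k. f k \<in> carrier R" unfolding f_def using x y by simp
  define A where "A = (\<lambda>k. [(n choose k)] \<cdot> (x [^] Suc k \<otimes> y [^] (n - k)))"
  define B where "B = (\<lambda>k. [(n choose k)] \<cdot> (x [^] k \<otimes> y [^] (Suc n - k)))"
  have Ac: "\<And>k. A k \<in> carrier R" unfolding A_def using x y by simp
  have Bc: "\<And>k. B k \<in> carrier R" unfolding B_def using x y by simp
  have "(x \<oplus> y) [^] Suc n = bsum f n \<otimes> (x \<oplus> y)" using Suc by (simp add: f_def)
  also have "\<dots> = (x \<oplus> y) \<otimes> bsum f n" using x y fc bsum_closed by (simp add: m_comm)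
  also have "\<dots> = x \<otimes> bsum f n \<oplus> y \<otimes> bsum f n" using x y fc bsum_closed by (simp add: l_distr)
  also have "x \<otimes> bsum f n = bsum (\<lambda>k. x \<otimes> f k) n" by (rule bsum_cmult[OF fc x])
  also have "\<dots> = bsum A n"
    by (rule bsum_cong) (use x y in \<open>simp add: f_def A_def add_pow_rdistr m_ac\<close>)
  also have "y \<otimes> bsum f n = bsum (\<lambda>k. y \<otimes> f k) n" by (rule bsum_cmult[OF fc y])
  also have "\<dots> = bsum B n"
    by (rule bsum_cong) (use x y in \<open>simp add: f_def B_def add_pow_rdistr m_ac Suc_diff_le\<close>)
  finally have e1: "(x \<oplus> y) [^] Suc n = bsum A n \<oplus> bsum B n" .
  define g where "g = (\<lambda>k. [(Suc n choose k)] \<cdot> (x [^] k \<otimes> y [^] (Suc n - k)))"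
  have gc: "\<And>k. g k \<in> carrier R" unfolding g_def using x y by simp
  define A' where "A' = (\<lambda>k. if k = 0 then \<zero> else A (k - 1))"
  have A'c: "\<And>k. A' k \<in> carrier R" unfolding A'_def using Ac by simp
  have gsplit: "\<And>k. k \<le> Suc n \<Longrightarrow> g k = A' k \<oplus> B k"
  proof -
    fix k assume k: "k \<le> Suc n"
    show "g k = A' k \<oplus> B k"
    proof (cases k)
      case 0 then show ?thesis unfolding g_def A'_def B_def using x y by simp
    next
      case (Suc j)
      have "g k = [(n choose j)] \<cdot> (x [^] k \<otimes> y [^] (Suc n - k)) \<oplus> [(n choose k)] \<cdot> (x [^] k \<otimes> y [^] (Suc n - k))"
        unfolding g_def using Suc x y by (simp add: add.nat_pow_mult)
      also have "\<dots> = A' k \<oplus> B k" unfolding A'_def A_def B_def using Suc x y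
        by simp
      finally show ?thesis .
    qed
  qed
  have "bsum g (Suc n) = bsum (\<lambda>k. A' k \<oplus> B k) (Suc n)" using gsplit by (rule bsum_cong)
  also have "\<dots> = bsum A' (Suc n) \<oplus> bsum B (Suc n)" using A'c Bc by (rule bsum_add)
  also have "bsum A' (Suc n) = bsum A n"
    using bsum_shift[of A' n] A'c Ac bsum_closed[OF Ac] by (simp add: A'_def)
  also have "bsum B (Suc n) = bsum B n"
  proof -
    have "B (Suc n) = \<zero>" by (simp add: B_def binomial_eq_0)
    then show ?thesis using bsum_closed[of B n] Bc by simp
  qed
  finally show ?case using e1 by (simp add: g_def)
qed

lemma charp_mult: "w \<in> carrier R \<Longrightarrow> p dvd c \<Longrightarrow> [c] \<cdot> w = \<zero>"
proof -
  assume w: "w \<in> carrier R" and "p dvd c"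
  then obtain j where j: "c = p * j" by auto
  have "[p] \<cdot> w = [p] \<cdot> \<one> \<otimes> w" using w by (simp add: add_pow_ldistr)
  then have "[p] \<cdot> w = \<zero>" using charp w by simp
  have "[c] \<cdot> w = [j] \<cdot> ([p] \<cdot> w)" using j w add.nat_pow_pow[of w j p] by simp
  then show ?thesis using \<open>[p] \<cdot> w = \<zero>\<close> by (simp add: add.nat_pow_one)
qed

lemma bsum_ends: "(\<And>k. f k \<in> carrier R) \<Longrightarrow> (\<And>k. 0 < k \<Longrightarrow> k < n \<Longrightarrow> f k = \<zero>) \<Longrightarrow> 0 < n \<Longrightarrow>
  bsum f n = f 0 \<oplus> f n"
proof -
  assume fc: "\<And>k. f k \<in> carrier R" and z: "\<And>k. 0 < k \<Longrightarrow> k < n \<Longrightarrow> f k = \<zero>" and n: "0 < n"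
  have "\<And>m. m < n \<Longrightarrow> bsum f m = f 0"
  proof -
    fix m show "m < n \<Longrightarrow> bsum f m = f 0" by (induct m) (use z fc in auto)
  qed
  then have "bsum f (n - 1) = f 0" using n by simp
  moreover have "bsum f n = bsum f (n - 1) \<oplus> f n" using n by (cases n) auto
  ultimately show ?thesis by simp
qed

lemma frob: assumes x: "x \<in> carrier R" and y: "y \<in> carrier R"
  shows "(x \<oplus> y) [^] p = x [^] p \<oplus> y [^] p"
proof -
  define f where "f = (\<lambda>k. [(p choose k)] \<cdot> (x [^] k \<otimes> y [^] (p - k)))"
  have fc: "\<And>k. f k \<in> carrier R" unfolding f_def using x y by simp
  have "(x \<oplus> y) [^] p = bsum f p" unfolding f_def by (rule binomial[OF x y])
  also have "\<dots> = f 0 \<oplus> f p"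
  proof (rule bsum_ends[OF fc])
    fix k assume "0 < k" "k < p"
    then have "p dvd (p choose k)" using dvd_choose_prime primep by auto
    then show "f k = \<zero>" unfolding f_def using charp_mult x y by simp
  qed (use p_gt1 in auto)
  also have "f 0 = y [^] p" unfolding f_def using x y by (simp add: add.nat_pow_eone)
  also have "f p = x [^] p" unfolding f_def using x y by (simp add: add.nat_pow_eone)
  also have "y [^] p \<oplus> x [^] p = x [^] p \<oplus> y [^] p" using x y by (simp add: a_comm)
  finally show ?thesis .
qed

lemma frob_pow: assumes x: "x \<in> carrier R" and y: "y \<in> carrier R"
  shows "(x \<oplus> y) [^] (p ^ k) = x [^] (p ^ k) \<oplus> y [^] (p ^ k)"
proof (induct k)
  case 0 then show ?case using x y by simp
next
  case (Suc k)
  have "(x \<oplus> y) [^] (p ^ Suc k) = ((x \<oplus> y) [^] (p ^ k)) [^] p" using x y by (simp add: nat_pow_pow mult.commute)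
  also have "\<dots> = (x [^] (p ^ k)) [^] p \<oplus> (y [^] (p ^ k)) [^] p" using Suc x y frob by simp
  also have "\<dots> = x [^] (p ^ Suc k) \<oplus> y [^] (p ^ Suc k)" using x y by (simp add: nat_pow_pow mult.commute)
  finally show ?case .
qed

lemma frob_pow_minus: assumes x: "x \<in> carrier R" and y: "y \<in> carrier R"
  shows "(x \<ominus> y) [^] (p ^ k) = x [^] (p ^ k) \<ominus> y [^] (p ^ k)"
proof -
  have e: "(x \<ominus> y) \<oplus> y = x" using x y by algebra
  have "x [^] (p ^ k) = (x \<ominus> y) [^] (p ^ k) \<oplus> y [^] (p ^ k)"
    using frob_pow[of "x \<ominus> y" y k] x y e by simp
  moreover have "\<And>a b c. a \<in> carrier R \<Longrightarrow> b \<in> carrier R \<Longrightarrow> c = a \<oplus> b \<Longrightarrow> a = c \<ominus> b"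
    by algebra
  ultimately show ?thesis using x y by simp
qed


subsection \<open>Convergence\<close>

lemma conv_iff: "(\<And>n. f n \<in> carrier R) \<Longrightarrow> x \<in> carrier R \<Longrightarrow>
  vconverges R v f x \<longleftrightarrow> (\<forall>M. \<exists>N. \<forall>n\<ge>N. vge (f n \<ominus> x) M)"
  by (simp add: vconverges_def vclose_iff)

lemma cauchy_iff: "(\<And>n. f n \<in> carrier R) \<Longrightarrow>
  vcauchy R v f \<longleftrightarrow> (\<forall>M. \<exists>N. \<forall>m\<ge>N. \<forall>n\<ge>N. vge (f m \<ominus> f n) M)"
  by (simp add: vcauchy_def vclose_iff)

lemma conv_unique:
  assumes fc: "\<And>n. f n \<in> carrier R" and x: "x \<in> carrier R" and y: "y \<in> carrier R"
    and cx: "vconverges R v f x" and cy: "vconverges R v f y"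
  shows "x = y"
proof (rule ccontr)
  assume ne: "x \<noteq> y"
  define M where "M = v (x \<ominus> y) + 1"
  obtain N1 where N1: "\<And>n. n \<ge> N1 \<Longrightarrow> vge (f n \<ominus> x) M" using cx conv_iff[of f x, OF fc x] by blast
  obtain N2 where N2: "\<And>n. n \<ge> N2 \<Longrightarrow> vge (f n \<ominus> y) M" using cy conv_iff[of f y, OF fc y] by blast
  define n where "n = max N1 N2"
  have a: "vge (f n \<ominus> x) M" "vge (f n \<ominus> y) M" using N1 N2 n_def by auto
  have "x \<ominus> y = (f n \<ominus> y) \<ominus> (f n \<ominus> x)" using fc[of n] x y by algebra
  then have "vge (x \<ominus> y) M" using vge_sub[OF _ _ a(2) a(1)] fc[of n] x y by simp
  moreover have "x \<ominus> y \<noteq> \<zero>" using ne x y r_right_minus_eq by simp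
  ultimately show False unfolding vge_def M_def by simp
qed

lemma conv_cauchy:
  assumes fc: "\<And>n. f n \<in> carrier R" and x: "x \<in> carrier R" and cx: "vconverges R v f x"
  shows "vcauchy R v f"
  unfolding cauchy_iff[of f, OF fc]
proof
  fix M
  obtain N where N: "\<And>n. n \<ge> N \<Longrightarrow> vge (f n \<ominus> x) M" using cx conv_iff[of f x, OF fc x] by blast
  have "\<forall>m\<ge>N. \<forall>n\<ge>N. vge (f m \<ominus> f n) M"
  proof (intro allI impI)
    fix m n assume "m \<ge> N" "n \<ge> N"
    then have "vge (f m \<ominus> x) M" "vge (x \<ominus> f n) M" using N vge_swap fc x by auto
    then show "vge (f m \<ominus> f n) M" using vge_trans fc x by blast
  qed
  then show "\<exists>N. \<forall>m\<ge>N. \<forall>n\<ge>N. vge (f m \<ominus> f n) M" by blast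
qed

lemma conv_add:
  assumes fc: "\<And>n. f n \<in> carrier R" and gc: "\<And>n. g n \<in> carrier R" and x: "x \<in> carrier R" and y: "y \<in> carrier R"
    and cx: "vconverges R v f x" and cy: "vconverges R v g y"
  shows "vconverges R v (\<lambda>n. f n \<oplus> g n) (x \<oplus> y)"
  unfolding conv_iff[of "\<lambda>n. f n \<oplus> g n", OF a_closed[OF fc gc] a_closed[OF x y]]
proof
  fix M
  obtain N1 where N1: "\<And>n. n \<ge> N1 \<Longrightarrow> vge (f n \<ominus> x) M" using cx conv_iff[of f x, OF fc x] by blast
  obtain N2 where N2: "\<And>n. n \<ge> N2 \<Longrightarrow> vge (g n \<ominus> y) M" using cy conv_iff[of g y, OF gc y] by blast
  have "\<forall>n\<ge>max N1 N2. vge ((f n \<oplus> g n) \<ominus> (x \<oplus> y)) M"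
  proof (intro allI impI)
    fix n assume "n \<ge> max N1 N2"
    then have a: "vge (f n \<ominus> x) M" "vge (g n \<ominus> y) M" using N1 N2 by auto
    have "(f n \<oplus> g n) \<ominus> (x \<oplus> y) = (f n \<ominus> x) \<oplus> (g n \<ominus> y)" using fc[of n] gc[of n] x y by algebra
    then show "vge ((f n \<oplus> g n) \<ominus> (x \<oplus> y)) M" using vge_add[OF _ _ a] fc[of n] gc[of n] x y by simp
  qed
  then show "\<exists>N. \<forall>n\<ge>N. vge ((f n \<oplus> g n) \<ominus> (x \<oplus> y)) M" by blast
qed

lemma conv_cmult:
  assumes fc: "\<And>n. f n \<in> carrier R" and x: "x \<in> carrier R" and c: "c \<in> carrier R"
    and cx: "vconverges R v f x"
  shows "vconverges R v (\<lambda>n. c \<otimes> f n) (c \<otimes> x)"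
  unfolding conv_iff[of "\<lambda>n. c \<otimes> f n", OF m_closed[OF c fc] m_closed[OF c x]]
proof
  fix M
  show "\<exists>N. \<forall>n\<ge>N. vge (c \<otimes> f n \<ominus> c \<otimes> x) M"
  proof (cases "c = \<zero>")
    case True
    have "\<And>n. c \<otimes> f n \<ominus> c \<otimes> x = \<zero>" using True fc x by (simp add: r_right_minus_eq)
    then show ?thesis by simp
  next
    case False
    obtain N where N: "\<And>n. n \<ge> N \<Longrightarrow> vge (f n \<ominus> x) (M - v c)" using cx conv_iff[of f x, OF fc x] by blast
    have "\<forall>n\<ge>N. vge (c \<otimes> f n \<ominus> c \<otimes> x) M"
    proof (intro allI impI)
      fix n assume "n \<ge> N"
      then have a: "vge (f n \<ominus> x) (M - v c)" using N by auto
      have "c \<otimes> f n \<ominus> c \<otimes> x = (f n \<ominus> x) \<otimes> c" using fc[of n] x c by algebra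
      then show "vge (c \<otimes> f n \<ominus> c \<otimes> x) M" using vge_mult_v[OF _ c False a] fc[of n] x by simp
    qed
    then show ?thesis by blast
  qed
qed

lemma conv_shift:
  assumes fc: "\<And>n. f n \<in> carrier R" and x: "x \<in> carrier R" and cx: "vconverges R v f x"
  shows "vconverges R v (\<lambda>n. f (Suc n)) x"
  using cx fc x unfolding conv_iff[of f x, OF fc x] conv_iff[of "\<lambda>n. f (Suc n)" x, OF fc x]
  by (meson le_SucI)

lemma vge_nat_bound: "\<exists>N::nat. \<forall>n\<ge>N. M \<le> real n"
  by (metis dual_order.trans of_nat_le_iff real_nat_ceiling_ge)

subsection \<open>Completeness of finite-dimensional subspaces\<close>

lemma dim_complete_aux: "dimension n K' E \<Longrightarrow> K' = K \<Longrightarrow> vcomplete R v E"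
proof (induction rule: dimension.induct)
  case zero_dim
  show ?case unfolding vcomplete_def
  proof (intro allI impI)
    fix f assume "(\<forall>n. f n \<in> {\<zero>}) \<and> vcauchy R v f"
    then have "\<And>n. f n = \<zero>" by auto
    then have "vconverges R v f \<zero>" unfolding vconverges_def vclose_def by simp
    then show "\<exists>x\<in>{\<zero>}. vconverges R v f x" by blast
  qed
next
  case (Suc_dim th E n K')
  then have KK: "K' = K" by simp
  have dimE: "dimension n K E" using Suc_dim.hyps(3) KK by simp
  have IH: "vcomplete R v E" using Suc_dim.IH KK by simp
  note sp = space_subgroup_props[OF subK dimE]
  have th: "th \<in> carrier R" "th \<notin> E" by fact+
  have th0: "th \<noteq> \<zero>" using th sp(2) by auto
  have Kc: "\<And>k. k \<in> K \<Longrightarrow> k \<in> carrier R" using K_carr by auto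
  have Ec: "\<And>y. y \<in> E \<Longrightarrow> y \<in> carrier R" using sp(1) by auto
  have Esub: "\<And>y z. y \<in> E \<Longrightarrow> z \<in> E \<Longrightarrow> y \<ominus> z \<in> E" using sp(3,4) by (simp add: minus_eq r_neg)
  have Ksub: "\<And>y z. y \<in> K \<Longrightarrow> z \<in> K \<Longrightarrow> y \<ominus> z \<in> K"
    using subK by (simp add: minus_eq subringE(5,6) subfieldE(1))
  have thy: "\<And>y. y \<in> E \<Longrightarrow> th \<ominus> y \<noteq> \<zero>" using th Ec r_right_minus_eq by blast
  have "\<exists>C. \<forall>y\<in>E. v (th \<ominus> y) \<le> C"
  proof (rule ccontr)
    assume "\<not> (\<exists>C. \<forall>y\<in>E. v (th \<ominus> y) \<le> C)"
    then have "\<forall>j::nat. \<exists>y\<in>E. v (th \<ominus> y) > real j" by (meson not_le)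
    then obtain yf where yf: "\<And>j. yf j \<in> E" "\<And>j. v (th \<ominus> yf j) > real j" by metis
    have yfc: "\<And>j. yf j \<in> carrier R" using yf Ec by auto
    have conv: "vconverges R v yf th"
      unfolding conv_iff[of yf th, OF yfc th(1)]
    proof
      fix M
      obtain N where N: "\<forall>n\<ge>N. M \<le> real n" using vge_nat_bound by blast
      have "\<forall>n\<ge>N. vge (yf n \<ominus> th) M"
        using N yf(2) vge_swap[OF yfc th(1)] unfolding vge_def by (smt (verit))
      then show "\<exists>N. \<forall>n\<ge>N. vge (yf n \<ominus> th) M" by blast
    qed
    then have "vcauchy R v yf" using conv_cauchy yfc th by blast
    then obtain y where y: "y \<in> E" "vconverges R v yf y" using IH yf(1) unfolding vcomplete_def by blast
    then have "y = th" using conv_unique[of yf y th, OF yfc _ th(1) _ conv] Ec by blast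
    then show False using y th by simp
  qed
  then obtain C where C: "\<And>y. y \<in> E \<Longrightarrow> v (th \<ominus> y) \<le> C" by blast
  have bound: "vge k (M - C)" if k: "k \<in> K" and y: "y \<in> E" and ge: "vge (k \<otimes> th \<oplus> y) M" for k y M
  proof (cases "k = \<zero>")
    case True then show ?thesis by simp
  next
    case False
    have kc: "k \<in> carrier R" using k Kc by auto
    note ik = inv_nz[OF kc False]
    define y' where "y' = \<ominus> (inv k \<otimes> y)"
    have y': "y' \<in> E" unfolding y'_def using sp(4,5) subfield_m_inv(1)[OF subK] k False y by auto
    have yc: "y \<in> carrier R" using y Ec by auto
    have eq: "k \<otimes> th \<oplus> y = k \<otimes> (th \<ominus> y')"
    proof -
      have "k \<otimes> (th \<ominus> y') = k \<otimes> th \<oplus> (k \<otimes> inv k) \<otimes> y"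
        unfolding y'_def using kc ik[THEN conjunct1] th yc by algebra
      then show ?thesis using ik yc kc by (simp add: m_assoc[symmetric])
    qed
    have nz: "th \<ominus> y' \<noteq> \<zero>" using thy y' by auto
    have "k \<otimes> th \<oplus> y \<noteq> \<zero>" using eq nz_mult[OF kc _ False nz] th y' Ec by simp
    then have "v (k \<otimes> th \<oplus> y) \<ge> M" using ge unfolding vge_def by auto
    moreover have "v (k \<otimes> th \<oplus> y) = v k + v (th \<ominus> y')" using eq vmult[OF kc _ False nz] th y' Ec by simp
    ultimately show ?thesis using C[OF y'] unfolding vge_def by simp
  qed
  show ?case unfolding KK vcomplete_def
  proof (intro allI impI)
    fix f assume fa: "(\<forall>n. f n \<in> line_extension K th E) \<and> vcauchy R v f"
    then have "\<forall>j. \<exists>k\<in>K. \<exists>y\<in>E. f j = k \<otimes> th \<oplus> y" using line_extension_mem_iff by blast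
    then obtain kf yf where kf: "\<And>j. kf j \<in> K" and yf: "\<And>j. yf j \<in> E" and fe: "\<And>j. f j = kf j \<otimes> th \<oplus> yf j"
      by metis
    have kfc: "\<And>j. kf j \<in> carrier R" using kf Kc by auto
    have yfc: "\<And>j. yf j \<in> carrier R" using yf Ec by auto
    have fc: "\<And>j. f j \<in> carrier R" using fe kfc yfc th by simp
    have fcau: "\<forall>M. \<exists>N. \<forall>m\<ge>N. \<forall>n\<ge>N. vge (f m \<ominus> f n) M" using fa cauchy_iff[of f, OF fc] by blast
    have dif: "f m \<ominus> f n = (kf m \<ominus> kf n) \<otimes> th \<oplus> (yf m \<ominus> yf n)" for m n
      using fe[of m] fe[of n] kfc[of m] kfc[of n] yfc[of m] yfc[of n] th by algebra
    have "vcauchy R v kf"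
      unfolding cauchy_iff[of kf, OF kfc]
    proof
      fix M
      obtain N where N: "\<forall>m\<ge>N. \<forall>n\<ge>N. vge (f m \<ominus> f n) (M + C)" using fcau by blast
      have "\<forall>m\<ge>N. \<forall>n\<ge>N. vge (kf m \<ominus> kf n) M"
      proof (intro allI impI)
        fix m n assume "m \<ge> N" "n \<ge> N"
        then have "vge ((kf m \<ominus> kf n) \<otimes> th \<oplus> (yf m \<ominus> yf n)) (M + C)" using N dif by auto
        then show "vge (kf m \<ominus> kf n) M" using bound[OF Ksub[OF kf kf] Esub[OF yf yf]] by force
      qed
      then show "\<exists>N. \<forall>m\<ge>N. \<forall>n\<ge>N. vge (kf m \<ominus> kf n) M" by blast
    qed
    then obtain k where k: "k \<in> K" "vconverges R v kf k" using complK kf unfolding vcomplete_def by blast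
    have kc: "k \<in> carrier R" using k Kc by auto
    have kcau: "\<forall>M. \<exists>N. \<forall>m\<ge>N. \<forall>n\<ge>N. vge (kf m \<ominus> kf n) M"
      using conv_cauchy[of kf k, OF kfc kc k(2)] cauchy_iff[of kf, OF kfc] by blast
    have "vcauchy R v yf"
      unfolding cauchy_iff[of yf, OF yfc]
    proof
      fix M
      obtain N1 where N1: "\<forall>m\<ge>N1. \<forall>n\<ge>N1. vge (f m \<ominus> f n) M" using fcau by blast
      obtain N2 where N2: "\<forall>m\<ge>N2. \<forall>n\<ge>N2. vge (kf m \<ominus> kf n) (M - v th)" using kcau by blast
      have "\<forall>m\<ge>max N1 N2. \<forall>n\<ge>max N1 N2. vge (yf m \<ominus> yf n) M"
      proof (intro allI impI)
        fix m n assume "m \<ge> max N1 N2" "n \<ge> max N1 N2"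
        then have a: "vge (f m \<ominus> f n) M" "vge (kf m \<ominus> kf n) (M - v th)" using N1 N2 by auto
        have b: "vge ((kf m \<ominus> kf n) \<otimes> th) M"
          using vge_mult_v[OF _ th(1) th0 a(2)] kfc by simp
        have "yf m \<ominus> yf n = (f m \<ominus> f n) \<ominus> (kf m \<ominus> kf n) \<otimes> th"
          using dif[of m n] fc[of m] fc[of n] kfc[of m] kfc[of n] yfc[of m] yfc[of n] th by algebra
        then show "vge (yf m \<ominus> yf n) M" using vge_sub[OF _ _ a(1) b] fc kfc th by simp
      qed
      then show "\<exists>N. \<forall>m\<ge>N. \<forall>n\<ge>N. vge (yf m \<ominus> yf n) M" by blast
    qed
    then obtain y where y: "y \<in> E" "vconverges R v yf y" using IH yf unfolding vcomplete_def by blast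
    have yc: "y \<in> carrier R" using y Ec by auto
    have c1: "vconverges R v (\<lambda>j. th \<otimes> kf j) (th \<otimes> k)" using conv_cmult[of kf k th, OF kfc kc th(1) k(2)] .
    have c2: "vconverges R v (\<lambda>j. th \<otimes> kf j \<oplus> yf j) (th \<otimes> k \<oplus> y)"
      using conv_add[of "\<lambda>j. th \<otimes> kf j" yf "th \<otimes> k" y, OF _ yfc _ yc c1 y(2)] kfc th kc by simp
    have "(\<lambda>j. th \<otimes> kf j \<oplus> yf j) = f"
    proof
      fix j show "th \<otimes> kf j \<oplus> yf j = f j" using fe[of j] kfc[of j] th by (simp add: m_comm)
    qed
    moreover have "th \<otimes> k \<oplus> y = k \<otimes> th \<oplus> y" using kc th by (simp add: m_comm)
    moreover have "k \<otimes> th \<oplus> y \<in> line_extension K th E" using line_extension_mem_iff k y by blast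
    ultimately show "\<exists>x\<in>line_extension K th E. vconverges R v f x" using c2 by auto
  qed
qed

lemma dim_complete: "dimension n K E \<Longrightarrow> vcomplete R v E"
  using dim_complete_aux by blast

lemma finite_ext_complete: "finite_ext R K L \<Longrightarrow> vcomplete R v L"
  unfolding finite_ext_def finite_dimension_def using dim_complete by blast


subsection \<open>Independence from valuations\<close>

lemma subfield_props:
  assumes "subfield L R"
  shows "L \<subseteq> carrier R" "\<zero> \<in> L" "\<one> \<in> L"
    "\<And>x y. x \<in> L \<Longrightarrow> y \<in> L \<Longrightarrow> x \<otimes> y \<in> L"
    "\<And>x y. x \<in> L \<Longrightarrow> y \<in> L \<Longrightarrow> x \<oplus> y \<in> L"
    "\<And>x. x \<in> L \<Longrightarrow> \<ominus> x \<in> L"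
    "\<And>x y. x \<in> L \<Longrightarrow> y \<in> L \<Longrightarrow> x \<ominus> y \<in> L"
    "\<And>x. x \<in> L \<Longrightarrow> x \<noteq> \<zero> \<Longrightarrow> inv x \<in> L"
    "\<And>x n. x \<in> L \<Longrightarrow> x [^] (n::nat) \<in> L"
proof -
  have sr: "subring L R" using assms subfieldE(1) by blast
  show "L \<subseteq> carrier R" "\<zero> \<in> L" "\<one> \<in> L" using subringE[OF sr] by auto
  show "\<And>x y. x \<in> L \<Longrightarrow> y \<in> L \<Longrightarrow> x \<otimes> y \<in> L" "\<And>x y. x \<in> L \<Longrightarrow> y \<in> L \<Longrightarrow> x \<oplus> y \<in> L"
    "\<And>x. x \<in> L \<Longrightarrow> \<ominus> x \<in> L" using subringE[OF sr] by auto
  then show "\<And>x y. x \<in> L \<Longrightarrow> y \<in> L \<Longrightarrow> x \<ominus> y \<in> L" by (simp add: minus_eq r_neg)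
  show "\<And>x. x \<in> L \<Longrightarrow> x \<noteq> \<zero> \<Longrightarrow> inv x \<in> L" using subfield_m_inv(1)[OF assms] by blast
  show "\<And>x n. x \<in> L \<Longrightarrow> x [^] (n::nat) \<in> L"
  proof -
    fix x n assume x: "x \<in> L"
    show "x [^] (n::nat) \<in> L" by (induct n) (use x subringE[OF sr] in auto)
  qed
qed

lemma vK_int: "k \<in> K \<Longrightarrow> k \<noteq> \<zero> \<Longrightarrow> v k \<in> \<int>"
  using valK by (metis DiffI Ints_of_int image_eqI rangeE singletonD)

lemma comb_val:
  assumes "set xs \<subseteq> carrier R - {\<zero>}" "sorted_wrt (\<lambda>x y. v x - v y \<notin> \<int>) xs"
    "set ks \<subseteq> K" "length ks = length xs"
  shows "combine ks xs = \<zero> \<or> (\<exists>y\<in>set xs. v (combine ks xs) - v y \<in> \<int>)"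
  using assms
proof (induction xs arbitrary: ks)
  case Nil then show ?case by simp
next
  case (Cons x xs)
  obtain k ks' where ks: "ks = k # ks'" using Cons.prems(4) by (cases ks) auto
  have x: "x \<in> carrier R" "x \<noteq> \<zero>" using Cons.prems(1) by auto
  have k: "k \<in> K" "k \<in> carrier R" using Cons.prems(3) ks K_carr by auto
  have ks'c: "set ks' \<subseteq> carrier R" using Cons.prems(3) ks K_carr by auto
  have xsc: "set xs \<subseteq> carrier R" using Cons.prems(1) by auto
  define c where "c = combine ks' xs"
  have cc: "c \<in> carrier R" unfolding c_def using ks'c xsc by simp
  have IH: "c = \<zero> \<or> (\<exists>y\<in>set xs. v c - v y \<in> \<int>)"
    unfolding c_def using Cons.IH[of ks'] Cons.prems ks by auto
  have eq: "combine ks (x # xs) = k \<otimes> x \<oplus> c" unfolding c_def ks by simp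
  have hd: "\<And>y. y \<in> set xs \<Longrightarrow> v x - v y \<notin> \<int>" using Cons.prems(2) by simp
  show ?case
  proof (cases "k = \<zero>")
    case True
    then have "combine ks (x # xs) = c" using eq x cc by simp
    then show ?thesis using IH by auto
  next
    case False
    have kx: "k \<otimes> x \<in> carrier R" "k \<otimes> x \<noteq> \<zero>" using k x False nz_mult by auto
    have vkx: "v (k \<otimes> x) - v x \<in> \<int>" using vmult[OF k(2) x(1) False x(2)] vK_int[OF k(1) False] by simp
    show ?thesis
    proof (cases "c = \<zero>")
      case True
      then have "combine ks (x # xs) = k \<otimes> x" using eq kx by simp
      then show ?thesis using vkx by auto
    next
      case False
      then obtain y where y: "y \<in> set xs" "v c - v y \<in> \<int>" using IH by auto
      have ne: "v (k \<otimes> x) \<noteq> v c"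
      proof
        assume "v (k \<otimes> x) = v c"
        then have "v x - v y = (v c - v y) - (v (k \<otimes> x) - v x)" by simp
        then show False using y(2) vkx Ints_diff[of "v c - v y" "v (k \<otimes> x) - v x"] hd[OF y(1)] by simp
      qed
      show ?thesis
      proof (cases "v (k \<otimes> x) < v c")
        case True
        then have "combine ks (x # xs) \<noteq> \<zero> \<and> v (combine ks (x # xs)) = v (k \<otimes> x)"
          using v_strict[OF kx(1) cc kx(2) False] eq by simp
        then show ?thesis using vkx by auto
      next
        case F2: False
        then have lt: "v c < v (k \<otimes> x)" using ne by simp
        have "c \<oplus> k \<otimes> x = k \<otimes> x \<oplus> c" using cc kx by (simp add: a_comm)
        then have "combine ks (x # xs) \<noteq> \<zero> \<and> v (combine ks (x # xs)) = v c"
          using v_strict[OF cc kx(1) False kx(2) lt] eq by simp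
        then show ?thesis using y by auto
      qed
    qed
  qed
qed

lemma indep_val:
  assumes "set xs \<subseteq> carrier R - {\<zero>}" "sorted_wrt (\<lambda>x y. v x - v y \<notin> \<int>) xs"
  shows "independent K xs"
  using assms
proof (induction xs)
  case Nil then show ?case by simp
next
  case (Cons x xs)
  have x: "x \<in> carrier R" "x \<noteq> \<zero>" using Cons.prems(1) by auto
  have xsc: "set xs \<subseteq> carrier R" using Cons.prems(1) by auto
  have "x \<notin> Span K xs"
  proof
    assume "x \<in> Span K xs"
    then obtain ks where ks: "set ks \<subseteq> K" "length ks = length xs" "x = combine ks xs"
      using Span_mem_iff_length_version[OF subK xsc] by blast
    then obtain y where "y \<in> set xs" "v x - v y \<in> \<int>"
      using comb_val[of xs ks] Cons.prems x by auto
    then show False using Cons.prems(2) by simp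
  qed
  moreover have "independent K xs" using Cons by simp
  ultimately show ?case using x li_Cons by blast
qed

definition small :: "'a \<Rightarrow> bool" where
  "small x \<longleftrightarrow> x = \<zero> \<or> v x > 0"

lemma small_zero[simp]: "small \<zero>" by (simp add: small_def)

lemma small_add: assumes "x \<in> carrier R" "y \<in> carrier R" "small x" "small y" shows "small (x \<oplus> y)"
  using assms vaddm[of x y] unfolding small_def by (cases "x = \<zero>"; cases "y = \<zero>"; force)

lemma small_neg: assumes "x \<in> carrier R" shows "small (\<ominus> x) \<longleftrightarrow> small x"
  using assms v_neg[of x] unfolding small_def by (metis a_inv_closed add.inv_eq_1_iff v_neg)

lemma small_sub: assumes "x \<in> carrier R" "y \<in> carrier R" "small x" "small y" shows "small (x \<ominus> y)"
  using small_add[of x "\<ominus> y"] small_neg[of y] assms by (simp add: minus_eq r_neg)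

lemma small_mult: assumes "x \<in> carrier R" "y \<in> carrier R" "small x" "vge y 0" shows "small (x \<otimes> y)"
  using assms vmult[of x y] nz_mult[of x y] unfolding small_def vge_def by (cases "x = \<zero>"; cases "y = \<zero>"; auto)

lemma small_swap: assumes "x \<in> carrier R" "y \<in> carrier R" shows "small (x \<ominus> y) \<longleftrightarrow> small (y \<ominus> x)"
proof -
  have "y \<ominus> x = \<ominus> (x \<ominus> y)" using assms by algebra
  then show ?thesis using small_neg[of "x \<ominus> y"] assms by simp
qed

lemma small_trans: assumes "x \<in> carrier R" "y \<in> carrier R" "z \<in> carrier R" "small (x \<ominus> y)" "small (y \<ominus> z)"
  shows "small (x \<ominus> z)"
proof -
  have "x \<ominus> z = (x \<ominus> y) \<oplus> (y \<ominus> z)" using assms by algebra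
  then show ?thesis using small_add[of "x \<ominus> y" "y \<ominus> z"] assms by simp
qed

lemma vge0_mult: "x \<in> carrier R \<Longrightarrow> y \<in> carrier R \<Longrightarrow> vge x 0 \<Longrightarrow> vge y 0 \<Longrightarrow> vge (x \<otimes> y) 0"
  using vge_mult[of x y 0 0] by simp

lemma vge0_pow: "x \<in> carrier R \<Longrightarrow> vge x 0 \<Longrightarrow> vge (x [^] (n::nat)) 0"
proof (induct n)
  case 0 then show ?case using v_one by (simp add: vge_def)
next
  case (Suc n) then show ?case using vge0_mult[of "x [^] n" x] by simp
qed

lemma small_pow_root: assumes "y \<in> carrier R" "small (y [^] (k::nat))" "k > 0" shows "small y"
proof (cases "y = \<zero>")
  case True then show ?thesis by simp
next
  case False
  have "y [^] k \<noteq> \<zero>" using pow_nz[OF assms(1) False] .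
  then have "v (y [^] k) > 0" using assms(2) unfolding small_def by simp
  then have "real k * v y > 0" using v_pow[OF assms(1) False] by simp
  then have "v y > 0" using assms(3) by (simp add: zero_less_mult_iff)
  then show ?thesis unfolding small_def by simp
qed

lemma combine_neg_scale:
  "set ks \<subseteq> carrier R \<Longrightarrow> set us \<subseteq> carrier R \<Longrightarrow> a \<in> carrier R \<Longrightarrow>
   combine (map (\<lambda>k. \<ominus> (a \<otimes> k)) ks) us = \<ominus> (a \<otimes> combine ks us)"
proof (induct ks us rule: combine.induct)
  case (1 k Ks u Us)
  then have IH: "combine (map (\<lambda>k. \<ominus> (a \<otimes> k)) Ks) Us = \<ominus> (a \<otimes> combine Ks Us)" by simp
  have c: "k \<in> carrier R" "u \<in> carrier R" "combine Ks Us \<in> carrier R" using 1 by auto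
  show ?case using IH c \<open>a \<in> carrier R\<close> by simp algebra
next
  case ("2_1" Us) then show ?case by simp
next
  case ("2_2" Ks) then show ?case by (cases Ks) simp_all
qed

lemma combine_close:
  "set ks \<subseteq> carrier R \<Longrightarrow> set us \<subseteq> carrier R \<Longrightarrow> (\<forall>u\<in>set us. vge u 0) \<Longrightarrow>
   (\<forall>k\<in>set ks. phi k \<in> carrier R \<and> small (k \<ominus> phi k)) \<Longrightarrow>
   small (combine ks us \<ominus> combine (map phi ks) us)"
proof (induct ks us rule: combine.induct)
  case (1 k Ks u Us)
  then have IH: "small (combine Ks Us \<ominus> combine (map phi Ks) Us)" by simp
  have c: "k \<in> carrier R" "u \<in> carrier R" "combine Ks Us \<in> carrier R" "phi k \<in> carrier R"
    "set (map phi Ks) \<subseteq> carrier R" using 1 by auto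
  then have c2: "combine (map phi Ks) Us \<in> carrier R" using 1 by simp
  have e: "combine (k # Ks) (u # Us) \<ominus> combine (map phi (k # Ks)) (u # Us)
     = (k \<ominus> phi k) \<otimes> u \<oplus> (combine Ks Us \<ominus> combine (map phi Ks) Us)"
    using c c2 by simp algebra
  have "small ((k \<ominus> phi k) \<otimes> u)" using small_mult[of "k \<ominus> phi k" u] c 1 by simp
  then show ?case using e small_add IH c c2 by simp
next
  case ("2_1" Us) then show ?case by (simp add: minus_eq r_neg)
next
  case ("2_2" Ks) then show ?case by (cases Ks) (simp_all add: minus_eq)
qed

lemma pow_close:
  assumes x: "x \<in> carrier R" "vge x 0" and y: "y \<in> carrier R" "vge y 0" and c: "vge (x \<ominus> y) M"
  shows "vge (x [^] (k::nat) \<ominus> y [^] k) M"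
proof (induct k)
  case 0 then show ?case using x y by (simp add: minus_eq r_neg)
next
  case (Suc k)
  have xk: "x [^] k \<in> carrier R" "vge (x [^] k) 0" using vge0_pow x by auto
  have e: "x [^] Suc k \<ominus> y [^] Suc k = (x \<ominus> y) \<otimes> x [^] k \<oplus> (x [^] k \<ominus> y [^] k) \<otimes> y"
  proof -
    have yk: "y [^] k \<in> carrier R" using y by simp
    have s1: "x [^] Suc k = x [^] k \<otimes> x" "y [^] Suc k = y [^] k \<otimes> y" by simp_all
    show ?thesis unfolding s1 using xk(1) yk x(1) y(1) by algebra
  qed
  have "vge ((x \<ominus> y) \<otimes> x [^] k) M" using vge_mult[of "x \<ominus> y" "x [^] k" M 0] x y xk c by simp
  moreover have "vge ((x [^] k \<ominus> y [^] k) \<otimes> y) M" using vge_mult[of "x [^] k \<ominus> y [^] k" y M 0] x y Suc by simp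
  ultimately show ?case using e vge_add x y xk by simp
qed

lemma conv_pow:
  assumes fc: "\<And>n. f n \<in> carrier R" and fi: "\<And>n. vge (f n) 0" and x: "x \<in> carrier R" "vge x 0"
    and cx: "vconverges R v f x"
  shows "vconverges R v (\<lambda>n. f n [^] (k::nat)) (x [^] k)"
  unfolding conv_iff[of "\<lambda>n. f n [^] k" "x [^] k", OF nat_pow_closed[OF fc] nat_pow_closed[OF x(1)]]
proof
  fix M
  obtain N where N: "\<And>n. n \<ge> N \<Longrightarrow> vge (f n \<ominus> x) M" using cx conv_iff[of f x, OF fc x(1)] by blast
  have "\<forall>n\<ge>N. vge (f n [^] k \<ominus> x [^] k) M" using pow_close[OF fc fi x] N by blast
  then show "\<exists>N. \<forall>n\<ge>N. vge (f n [^] k \<ominus> x [^] k) M" by blast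
qed

lemma small_pow_one: assumes y: "y \<in> carrier R" "vge y 0" "small (y \<ominus> \<one>)" shows "small (y [^] (k::nat) \<ominus> \<one>)"
proof (induct k)
  case 0 then show ?case by (simp add: minus_eq r_neg)
next
  case (Suc k)
  have yk: "y [^] k \<in> carrier R" using y by simp
  have s1: "y [^] Suc k = y [^] k \<otimes> y" by simp
  have e: "y [^] Suc k \<ominus> \<one> = (y [^] k \<ominus> \<one>) \<otimes> y \<oplus> (y \<ominus> \<one>)" unfolding s1 using yk y(1) by algebra
  have "small ((y [^] k \<ominus> \<one>) \<otimes> y)" using small_mult[OF _ y(1) Suc y(2)] yk by simp
  then show ?case using e small_add[OF _ _ _ y(3)] yk y by simp
qed

primrec cseq :: "'a \<Rightarrow> nat \<Rightarrow> nat \<Rightarrow> 'a" where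
  "cseq w q 0 = \<one>"
| "cseq w q (Suc t) = cseq w q t \<otimes> w [^] (q ^ t)"

lemma vge_pow: assumes "y \<in> carrier R" "vge y d" "d \<ge> 0" "n > 0" shows "vge (y [^] (n::nat)) (real n * d)"
proof (cases "y = \<zero>")
  case True then show ?thesis using assms by (simp add: nat_pow_zero)
next
  case False
  then show ?thesis using assms v_pow[OF assms(1) False] unfolding vge_def
    by (simp add: mult_left_mono pow_nz)
qed

lemma ru_mult: assumes "root_of_unity R x" "root_of_unity R y" shows "root_of_unity R (x \<otimes> y)"
proof -
  obtain a b :: nat where ab: "a > 0" "x [^] a = \<one>" "b > 0" "y [^] b = \<one>" "x \<in> carrier R" "y \<in> carrier R"
    using assms unfolding root_of_unity_def by blast
  have "x [^] (a * b) = (x [^] a) [^] b" using ab(5) by (simp add: nat_pow_pow)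
  then have xa: "x [^] (a * b) = \<one>" using ab(2) by (metis nat_pow_one)
  have "y [^] (a * b) = (y [^] b) [^] a" using ab(6) by (simp add: nat_pow_pow mult.commute)
  then have yb: "y [^] (a * b) = \<one>" using ab(4) by (metis nat_pow_one)
  have "(x \<otimes> y) [^] (a * b) = x [^] (a * b) \<otimes> y [^] (a * b)" using ab by (simp add: nat_pow_distrib)
  then have "(x \<otimes> y) [^] (a * b) = \<one>" using xa yb by simp
  then show ?thesis unfolding root_of_unity_def using ab by (intro conjI exI[of _ "a * b"]) auto
qed

lemma ru_inv: assumes "root_of_unity R x" shows "root_of_unity R (inv x)"
proof -
  obtain a :: nat where a: "a > 0" "x [^] a = \<one>" "x \<in> carrier R" using assms unfolding root_of_unity_def by blast
  have x0: "x \<noteq> \<zero>" using a by (metis nat_pow_zero less_not_refl2 one_not_zero)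
  note ix = inv_nz[OF a(3) x0]
  have "(x \<otimes> inv x) [^] a = \<one>" using ix by simp
  moreover have "x [^] a \<otimes> (inv x) [^] a = (x \<otimes> inv x) [^] a"
    by (rule nat_pow_distrib[symmetric]) (use a ix in auto)
  ultimately have "x [^] a \<otimes> (inv x) [^] a = \<one>" by simp
  then have "(inv x) [^] a = \<one>" using a ix by simp
  then show ?thesis unfolding root_of_unity_def using a ix by blast
qed

lemma pos_class_ru: assumes x: "x \<in> carrier R" "x \<noteq> \<zero>" and z: "root_of_unity R z"
  shows "pos_class R (x \<otimes> z) = pos_class R x"
proof -
  have zc: "z \<in> carrier R" using z unfolding root_of_unity_def by auto
  have z0: "z \<noteq> \<zero>" using z unfolding root_of_unity_def by (metis nat_pow_zero less_not_refl2 one_not_zero)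
  note ix = inv_nz[OF x] and iz = inv_nz[OF zc z0]
  have xz: "x \<otimes> z \<in> carrier R" "x \<otimes> z \<noteq> \<zero>" using x zc z0 nz_mult by auto
  have ixz: "inv (x \<otimes> z) = inv x \<otimes> inv z"
  proof -
    have "(x \<otimes> z) \<otimes> (inv x \<otimes> inv z) = (x \<otimes> inv x) \<otimes> (z \<otimes> inv z)" using x zc ix iz by (simp add: m_ac)
    then have "(x \<otimes> z) \<otimes> (inv x \<otimes> inv z) = \<one>" using ix iz by simp
    then show ?thesis using comm_inv_char xz ix iz by simp
  qed
  show ?thesis unfolding pos_class_def
  proof (intro Collect_cong conj_cong refl iffI)
    fix y assume y: "y \<in> carrier R - {\<zero>}"
    {
      assume "root_of_unity R (y \<otimes> inv (x \<otimes> z))"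
      moreover have "y \<otimes> inv x = (y \<otimes> inv (x \<otimes> z)) \<otimes> z"
      proof -
        have "(y \<otimes> (inv x \<otimes> inv z)) \<otimes> z = (y \<otimes> inv x) \<otimes> (inv z \<otimes> z)"
          using y ix[THEN conjunct1] iz[THEN conjunct1] zc by (simp add: m_ac)
        also have "\<dots> = y \<otimes> inv x" using iz y ix by simp
        finally show ?thesis unfolding ixz by simp
      qed
      ultimately show "root_of_unity R (y \<otimes> inv x)" using ru_mult z by simp
    }
    {
      assume "root_of_unity R (y \<otimes> inv x)"
      moreover have "y \<otimes> inv (x \<otimes> z) = (y \<otimes> inv x) \<otimes> inv z" unfolding ixz using y ix iz zc by (simp add: m_ac)
      ultimately show "root_of_unity R (y \<otimes> inv (x \<otimes> z))" using ru_mult ru_inv z by simp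
    }
  qed
qed

lemma pth_root: assumes c: "c \<in> carrier R" and k: "k > 0" shows "\<exists>b\<in>carrier R. b [^] (k::nat) = c"
proof -
  define P where "P = monom \<one> (k - 1) @ [\<ominus> c]"
  have setP: "set P \<subseteq> carrier R" unfolding P_def monom_def using c by auto
  have Pc: "P \<in> carrier (poly_ring R)"
    unfolding univ_poly_def polynomial_def P_def monom_def using c by auto
  have degP: "degree P = k" unfolding P_def monom_def using k by simp
  have ev: "eval P x = x [^] k \<ominus> c" if x: "x \<in> carrier R" for x
  proof -
    have "eval P x = eval (monom \<one> (k - 1)) x \<otimes> x \<oplus> \<ominus> c"
      unfolding P_def by (rule eval_append_aux) (use x c in \<open>auto simp: monom_def\<close>)
    also have "\<dots> = x [^] (k - 1) \<otimes> x \<oplus> \<ominus> c" using eval_monom[of \<one> x "k - 1"] x by simp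
    also have "x [^] (k - 1) \<otimes> x = x [^] k" using k x by (metis Suc_diff_1 nat_pow_Suc)
    finally show ?thesis by (simp add: minus_eq)
  qed
  have "splitted P" using algebraically_closed.roots_over_carrier[OF algc Pc] .
  then have "size (roots P) = k" unfolding splitted_def degP .
  then have "roots P \<noteq> {#}" using k by auto
  then obtain x where "x \<in># roots P" by blast
  then have "is_root P x" using roots_mem_iff_is_root[OF Pc] by simp
  then have x: "x \<in> carrier R" "eval P x = \<zero>" unfolding is_root_def by auto
  then have "x [^] k = c" using ev[OF x(1)] r_right_minus_eq c by simp
  then show ?thesis using x by blast
qed

context
  fixes L assumes L: "finite_ext R K L"
begin

lemma subL: "subfield L R" using L unfolding finite_ext_def by auto
lemma KL: "K \<subseteq> L" using L unfolding finite_ext_def by auto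
lemmas Lp = subfield_props[OF subL]

lemma dimL: "\<exists>d. dimension d K L" using L unfolding finite_ext_def finite_dimension_def by auto

definition GL where "GL = v ` (L - {\<zero>})"

lemma GL_add: "g \<in> GL \<Longrightarrow> h \<in> GL \<Longrightarrow> g + h \<in> GL"
proof -
  assume "g \<in> GL" "h \<in> GL"
  then obtain x y where "x \<in> L" "x \<noteq> \<zero>" "y \<in> L" "y \<noteq> \<zero>" "g = v x" "h = v y" unfolding GL_def by auto
  then show "g + h \<in> GL" unfolding GL_def using vmult[of x y] nz_mult[of x y] Lp(1,4)
    by (metis DiffI image_eqI singletonD subsetD)
qed

lemma GL_neg: "g \<in> GL \<Longrightarrow> - g \<in> GL"
proof -
  assume "g \<in> GL"
  then obtain x where x: "x \<in> L" "x \<noteq> \<zero>" "g = v x" unfolding GL_def by auto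
  then have "inv x \<in> L" "inv x \<noteq> \<zero>" "v (inv x) = - g" using Lp(1,8) inv_nz v_inv by auto
  then have "inv x \<in> L - {\<zero>}" "v (inv x) = - g" by auto
  then show "- g \<in> GL" unfolding GL_def by (metis image_eqI)
qed

lemma GL_int: "real_of_int j \<in> GL"
proof -
  have "real_of_int j \<in> v ` (K - {\<zero>})" using valK by auto
  then show ?thesis unfolding GL_def using KL by auto
qed

lemma GL_intmult: "g \<in> GL \<Longrightarrow> real_of_int j * g \<in> GL"
proof -
  assume g: "g \<in> GL"
  have nat: "real n * g \<in> GL" for n :: nat
  proof (induct n)
    case 0 then show ?case using GL_int[of 0] by simp
  next
    case (Suc n) then show ?case using GL_add[OF Suc g] by (simp add: algebra_simps)
  qed
  show ?thesis
  proof (cases "j \<ge> 0")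
    case True then show ?thesis using nat[of "nat j"] by simp
  next
    case False then show ?thesis using GL_neg[OF nat[of "nat (- j)"]] by simp
  qed
qed

lemma GL_rat: assumes "dimension d K L" "g \<in> GL" shows "\<exists>r. 1 \<le> r \<and> r \<le> d \<and> real r * g \<in> \<int>"
proof (rule ccontr)
  assume nr: "\<not> (\<exists>r. 1 \<le> r \<and> r \<le> d \<and> real r * g \<in> \<int>)"
  obtain y where y: "y \<in> L" "y \<noteq> \<zero>" "v y = g" using assms(2) unfolding GL_def by auto
  have yc: "y \<in> carrier R" using y Lp(1) by auto
  define xs where "xs = map (\<lambda>j. y [^] j) [0..<Suc d]"
  have len: "length xs = Suc d" unfolding xs_def by simp
  have setL: "set xs \<subseteq> L" unfolding xs_def using Lp(9) y by auto
  have setc: "set xs \<subseteq> carrier R - {\<zero>}" unfolding xs_def using pow_nz[OF yc y(2)] yc by auto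
  have "sorted_wrt (\<lambda>x y. v x - v y \<notin> \<int>) xs"
    unfolding sorted_wrt_iff_nth_less
  proof (intro allI impI)
    fix i j assume ij: "i < j" "j < length xs"
    have xi: "xs ! i = y [^] i" "xs ! j = y [^] j" using ij len unfolding xs_def
      by (auto simp del: upt_Suc)
    have "v (xs ! i) - v (xs ! j) = - (real (j - i) * g)"
      using xi v_pow[OF yc y(2)] y(3) ij by (simp add: algebra_simps of_nat_diff)
    moreover have "real (j - i) * g \<notin> \<int>"
    proof -
      have "1 \<le> j - i" "j - i \<le> d" using ij len by auto
      then show ?thesis using nr by blast
    qed
    ultimately show "v (xs ! i) - v (xs ! j) \<notin> \<int>" using Ints_minus by fastforce
  qed
  then have "independent K xs" using indep_val setc by blast
  then have "length xs \<le> d" using independent_length_le_dimension[OF subK assms(1) _ setL] by blast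
  then show False using len by simp
qed

lemma GL_discrete: "\<exists>e::nat. e > 0 \<and> GL = {real_of_int k / real e | k. True}"
proof -
  obtain d where d: "dimension d K L" using dimL by blast
  define D where "D = (fact d :: nat)"
  have D: "D \<ge> 1" unfolding D_def by (simp add: fact_ge_1)
  have DG: "real D * g \<in> \<int>" if g: "g \<in> GL" for g
  proof -
    obtain r where r: "1 \<le> r" "r \<le> d" "real r * g \<in> \<int>" using GL_rat[OF d g] by blast
    obtain t where "D = r * t" using dvd_fact[OF r(1,2)] unfolding D_def by blast
    then have "real D * g = real t * (real r * g)" by simp
    then show ?thesis using r(3) by (metis Ints_mult Ints_of_nat)
  qed
  define P where "P = {g \<in> GL. 0 < g \<and> g \<le> 1}"
  have Pfin: "finite P"
  proof -
    have "P \<subseteq> (\<lambda>j. real_of_int j / real D) ` {1..int D}"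
    proof
      fix g assume gP: "g \<in> P"
      then obtain j where j: "real D * g = real_of_int j" using DG unfolding P_def by (auto elim: Ints_cases)
      have "g = real_of_int j / real D" using j D by (simp add: field_simps)
      moreover have "j \<ge> 1"
      proof -
        have "real D > 0" "g > 0" using D gP unfolding P_def by auto
        then have "real D * g > 0" by simp
        then have "real_of_int j > 0" using j by simp
        then show ?thesis by simp
      qed
      moreover have "j \<le> int D"
      proof -
        have "g \<le> 1" using gP unfolding P_def by simp
        then have "real D * g \<le> real D * 1" by (intro mult_left_mono) auto
        then have "real_of_int j \<le> real D" using j by simp
        then show ?thesis by linarith
      qed
      ultimately show "g \<in> (\<lambda>j. real_of_int j / real D) ` {1..int D}" by auto
    qed
    then show ?thesis by (rule finite_subset) simp
  qed
  have "1 \<in> P" unfolding P_def using GL_int[of 1] by simp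
  then have Pne: "P \<noteq> {}" by auto
  define g0 where "g0 = Min P"
  have g0P: "g0 \<in> P" unfolding g0_def using Pfin Pne by simp
  have g0min: "\<And>g. g \<in> P \<Longrightarrow> g0 \<le> g" unfolding g0_def using Pfin by simp
  have g0pos: "g0 > 0" "g0 \<in> GL" using g0P unfolding P_def by auto
  have mult: "\<exists>k::int. g = real_of_int k * g0" if g: "g \<in> GL" for g
  proof -
    define k where "k = \<lfloor>g / g0\<rfloor>"
    define r where "r = g - real_of_int k * g0"
    have rG: "r \<in> GL" unfolding r_def using GL_add[OF g GL_neg[OF GL_intmult[OF g0pos(2), of k]]] by simp
    have r0: "0 \<le> r" "r < g0"
    proof -
      have "real_of_int k \<le> g / g0" "g / g0 < real_of_int k + 1" unfolding k_def by linarith+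
      then show "0 \<le> r" "r < g0" unfolding r_def using g0pos(1) by (simp_all add: field_simps)
    qed
    have "r = 0"
    proof (rule ccontr)
      assume "r \<noteq> 0"
      then have "r \<in> P" unfolding P_def using rG r0 g0P unfolding P_def by auto
      then show False using g0min r0 by fastforce
    qed
    then show ?thesis unfolding r_def by auto
  qed
  obtain k0 where k0: "1 = real_of_int k0 * g0" using mult[OF GL_int[of 1]] by auto
  have k0pos: "k0 > 0" using k0 g0pos(1) by (metis mult_le_0_iff of_int_0_less_iff linorder_not_le zero_less_one less_le)
  define e where "e = nat k0"
  have e: "e > 0" "real e = real_of_int k0" unfolding e_def using k0pos by auto
  have g0e: "g0 = 1 / real e" using k0 e by (simp add: field_simps)
  have "GL = {real_of_int k / real e | k. True}"
  proof
    show "GL \<subseteq> {real_of_int k / real e | k. True}"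
    proof
      fix g assume "g \<in> GL"
      then obtain k where "g = real_of_int k * g0" using mult by blast
      then show "g \<in> {real_of_int k / real e | k. True}" using g0e by auto
    qed
  next
    show "{real_of_int k / real e | k. True} \<subseteq> GL"
    proof
      fix g assume "g \<in> {real_of_int k / real e | k. True}"
      then obtain k where "g = real_of_int k / real e" by auto
      then have "g = real_of_int k * g0" using g0e by simp
      then show "g \<in> GL" using GL_intmult[OF g0pos(2)] by simp
    qed
  qed
  then show ?thesis using e by blast
qed

lemma ram_index_L: "ram_index R v L > 0 \<and> GL = {real_of_int k / real (ram_index R v L) | k. True}"
proof -
  obtain e :: nat where e: "e > 0" "GL = {real_of_int k / real e | k. True}" using GL_discrete by blast
  have divs: "\<exists>k::int. real a = real_of_int k * real b"
    if a: "a > 0" "GL = {real_of_int k / real a | k. True}" and b: "b > 0" "GL = {real_of_int k / real b | k. True}"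
    for a b :: nat
  proof -
    have "1 / real b \<in> {real_of_int k / real b | k. True}"
      by (rule CollectI, rule exI[of _ 1]) simp
    then have "1 / real b \<in> GL" unfolding b(2) .
    then have "1 / real b \<in> {real_of_int k / real a | k. True}" unfolding a(2) .
    then obtain k where "1 / real b = real_of_int k / real a" by blast
    then have "real a = real_of_int k * real b" using a(1) b(1) by (simp add: field_simps)
    then show ?thesis by blast
  qed
  have uniq: "e' = e" if e': "e' > 0" "GL = {real_of_int k / real e' | k. True}" for e' :: nat
  proof -
    obtain k1 where k1: "real e' = real_of_int k1 * real e" using divs[OF e'(1) e'(2) e(1) e(2)] by blast
    obtain k2 where k2: "real e = real_of_int k2 * real e'" using divs[OF e(1) e(2) e'(1) e'(2)] by blast
    have "real_of_int k1 > 0" using k1 e(1) e'(1) by (metis of_nat_0_less_iff zero_less_mult_pos2)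
    then have k1p: "real_of_int k1 \<ge> 1" by simp
    have "real_of_int k2 > 0" using k2 e(1) e'(1) by (metis of_nat_0_less_iff zero_less_mult_pos2)
    then have k2p: "real_of_int k2 \<ge> 1" by simp
    have "real_of_int k1 * real e \<ge> 1 * real e" using k1p by (intro mult_right_mono) auto
    moreover have "real_of_int k2 * real e' \<ge> 1 * real e'" using k2p by (intro mult_right_mono) auto
    ultimately have "real e' \<ge> real e" "real e \<ge> real e'" using k1 k2 by linarith+
    then show ?thesis by simp
  qed
  have "ram_index R v L = e"
    unfolding ram_index_def
  proof (rule the_equality)
    show "0 < e \<and> v ` (L - {\<zero>}) = {real_of_int k / real e | k. True}" using e(1) e(2)[unfolded GL_def] by simp
  next
    fix e' assume H: "0 < e' \<and> v ` (L - {\<zero>}) = {real_of_int k / real e' | k. True}"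
    have G': "GL = {real_of_int k / real e' | k. True}" unfolding GL_def using H by simp
    have "0 < e'" using H by simp
    then show "e' = e" using uniq[OF _ G'] by blast
  qed
  then show ?thesis using e(1) e(2) by simp
qed


subsection \<open>Finiteness of the residue field of L\<close>

definition Fres where "Fres = (SOME F. finite F \<and> F \<subseteq> K \<and> (\<forall>s\<in>F. vge s 0) \<and>
   (\<forall>x\<in>K. vge x 0 \<longrightarrow> (\<exists>s\<in>F. small (x \<ominus> s))))"

lemma Fres: "finite Fres \<and> Fres \<subseteq> K \<and> (\<forall>s\<in>Fres. vge s 0) \<and>
   (\<forall>x\<in>K. vge x 0 \<longrightarrow> (\<exists>s\<in>Fres. small (x \<ominus> s)))"
proof -
  obtain F where F: "finite F" "F \<subseteq> K" "\<And>x. x \<in> K \<Longrightarrow> (x = \<zero> \<or> v x \<ge> 0) \<Longrightarrow> (\<exists>s \<in> F. x = s \<or> v (x \<ominus> s) > 0)"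
    using resK unfolding finite_residue_field_def by blast
  define F' where "F' = {s \<in> F. vge s 0}"
  have "finite F' \<and> F' \<subseteq> K \<and> (\<forall>s\<in>F'. vge s 0) \<and> (\<forall>x\<in>K. vge x 0 \<longrightarrow> (\<exists>s\<in>F'. small (x \<ominus> s)))"
  proof (intro conjI ballI impI)
    show "finite F'" "F' \<subseteq> K" using F unfolding F'_def by auto
    show "\<And>s. s \<in> F' \<Longrightarrow> vge s 0" unfolding F'_def by auto
    fix x assume x: "x \<in> K" "vge x 0"
    then obtain s where s: "s \<in> F" "x = s \<or> v (x \<ominus> s) > 0" using F(3)[of x] unfolding vge_def by auto
    have xc: "x \<in> carrier R" "s \<in> carrier R" using x s F(2) K_carr by auto
    have sm: "small (x \<ominus> s)" using s xc unfolding small_def by (auto simp: r_right_minus_eq)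
    have "s = x \<ominus> (x \<ominus> s)" using xc by algebra
    moreover have "vge (x \<ominus> s) 0" using sm unfolding small_def vge_def by auto
    ultimately have "vge s 0" using vge_sub[of x "x \<ominus> s" 0] x xc by simp
    then show "\<exists>s\<in>F'. small (x \<ominus> s)" using s(1) sm unfolding F'_def by auto
  qed
  then show ?thesis unfolding Fres_def by (rule someI)
qed

definition rindep :: "'a list \<Rightarrow> bool" where
  "rindep us \<longleftrightarrow> set us \<subseteq> L \<and> (\<forall>u\<in>set us. vge u 0) \<and>
     (\<forall>ks. set ks \<subseteq> K \<and> length ks = length us \<and> (\<forall>k\<in>set ks. vge k 0) \<and> small (combine ks us)
        \<longrightarrow> (\<forall>k\<in>set ks. small k))"

lemma rindep_indep: assumes "rindep us" shows "independent K us"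
proof (rule ccontr)
  assume dep: "\<not> independent K us"
  have usL: "set us \<subseteq> L" using assms unfolding rindep_def by auto
  then have usc: "set us \<subseteq> carrier R" using Lp(1) by auto
  obtain ks where ks: "length ks = length us" "combine ks us = \<zero>" "set ks \<subseteq> K" "set ks \<noteq> {\<zero>}"
    using dependent_imp_non_trivial_combine[OF subK usc dep] by blast
  have ksc: "set ks \<subseteq> carrier R" using ks(3) K_carr by auto
  have "us \<noteq> []" using dep by auto
  then have "ks \<noteq> []" using ks(1) by auto
  have nzne: "{k \<in> set ks. k \<noteq> \<zero>} \<noteq> {}"
  proof
    assume "{k \<in> set ks. k \<noteq> \<zero>} = {}"
    then have "set ks \<subseteq> {\<zero>}" by auto
    moreover have "set ks \<noteq> {}" using \<open>ks \<noteq> []\<close> by simp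
    ultimately have "set ks = {\<zero>}" by (metis subset_singletonD)
    then show False using ks(4) by simp
  qed
  have fin: "finite (v ` {k \<in> set ks. k \<noteq> \<zero>})" by simp
  have "Min (v ` {k \<in> set ks. k \<noteq> \<zero>}) \<in> v ` {k \<in> set ks. k \<noteq> \<zero>}"
    using Min_in[OF fin] nzne by blast
  then obtain k0 where k0A: "k0 \<in> {k \<in> set ks. k \<noteq> \<zero>}" and k0v: "Min (v ` {k \<in> set ks. k \<noteq> \<zero>}) = v k0"
    by blast
  then have k0: "k0 \<in> set ks" "k0 \<noteq> \<zero>" "v k0 = Min (v ` {k \<in> set ks. k \<noteq> \<zero>})" by auto
  have k0min: "\<And>k. k \<in> set ks \<Longrightarrow> k \<noteq> \<zero> \<Longrightarrow> v k0 \<le> v k" using k0(3) fin by simp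
  have k0c: "k0 \<in> carrier R" "k0 \<in> K" using k0 ksc ks(3) by auto
  note ik = inv_nz[OF k0c(1) k0(2)]
  have ik0K: "inv k0 \<in> K" using subfield_m_inv(1)[OF subK] k0c k0(2) by auto
  define ks' where "ks' = map ((\<otimes>) (inv k0)) ks"
  have "combine ks' us = inv k0 \<otimes> combine ks us" unfolding ks'_def
    using combine_r_distr[OF ksc usc, of "inv k0"] ik by simp
  then have c0: "combine ks' us = \<zero>" using ks(2) ik by simp
  have ks'K: "set ks' \<subseteq> K" unfolding ks'_def using ks(3) ik0K subfield_props(4)[OF subK] by auto
  have ks'i: "\<forall>k\<in>set ks'. vge k 0"
  proof
    fix k' assume "k' \<in> set ks'"
    then obtain k where k: "k \<in> set ks" "k' = inv k0 \<otimes> k" unfolding ks'_def by auto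
    show "vge k' 0"
    proof (cases "k = \<zero>")
      case True then show ?thesis using k ik by simp
    next
      case False
      have kc: "k \<in> carrier R" using k ksc by auto
      have "v k' = v k - v k0" using k vmult[of "inv k0" k] ik kc False v_inv[OF k0c(1) k0(2)] by simp
      then show ?thesis using k0min[OF k(1) False] unfolding vge_def by simp
    qed
  qed
  have len': "length ks' = length us" using ks(1) by (simp add: ks'_def)
  have H: "\<forall>ks. set ks \<subseteq> K \<and> length ks = length us \<and> (\<forall>k\<in>set ks. vge k 0) \<and> small (combine ks us)
        \<longrightarrow> (\<forall>k\<in>set ks. small k)" using assms unfolding rindep_def by blast
  have "\<forall>k\<in>set ks'. small k" using H[rule_format, of ks'] ks'K len' ks'i c0 by simp
  moreover have "\<one> \<in> set ks'" unfolding ks'_def using k0(1) ik by force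
  ultimately have "small \<one>" by blast
  then show False unfolding small_def using v_one by simp
qed

lemma rindep_len: assumes "rindep us" "dimension d K L" shows "length us \<le> d"
  using independent_length_le_dimension[OF subK assms(2) rindep_indep[OF assms(1)]] assms(1)
  unfolding rindep_def by auto

lemma rindep_max: "\<exists>us. rindep us \<and> (\<forall>ws. rindep ws \<longrightarrow> length ws \<le> length us)"
proof -
  obtain d where d: "dimension d K L" using dimL by blast
  define S where "S = {length us | us. rindep us}"
  have "rindep []" unfolding rindep_def by simp
  then have Sne: "0 \<in> S" unfolding S_def by auto
  have Sb: "S \<subseteq> {..d}" unfolding S_def using rindep_len[OF _ d] by auto
  then have Sfin: "finite S" using finite_subset by blast
  have "Max S \<in> S" using Sfin Sne Max_in by blast
  then obtain us where us: "rindep us" "length us = Max S" unfolding S_def by auto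
  have "\<forall>ws. rindep ws \<longrightarrow> length ws \<le> length us"
  proof (intro allI impI)
    fix ws assume "rindep ws"
    then have "length ws \<in> S" unfolding S_def by blast
    then have "length ws \<le> Max S" using Sfin by simp
    then show "length ws \<le> length us" using us(2) by simp
  qed
  then show ?thesis using us(1) by blast
qed

definition us0 where "us0 = (SOME us. rindep us \<and> (\<forall>ws. rindep ws \<longrightarrow> length ws \<le> length us))"

lemma us0: "rindep us0" "\<And>ws. rindep ws \<Longrightarrow> length ws \<le> length us0"
  using someI_ex[OF rindep_max] unfolding us0_def by blast+

lemma res_repr: assumes x: "x \<in> L" "vge x 0"
  shows "\<exists>ss. set ss \<subseteq> Fres \<and> length ss = length us0 \<and> small (x \<ominus> combine ss us0)"
proof -
  have u0: "set us0 \<subseteq> L" "\<forall>u\<in>set us0. vge u 0" using us0(1) unfolding rindep_def by auto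
  have u0c: "set us0 \<subseteq> carrier R" using u0 Lp(1) by auto
  have xc: "x \<in> carrier R" using x Lp(1) by auto
  have "\<not> rindep (x # us0)" using us0(2)[of "x # us0"] by auto
  then obtain ks where ks: "set ks \<subseteq> K" "length ks = Suc (length us0)" "\<forall>k\<in>set ks. vge k 0"
    "small (combine ks (x # us0))" "\<exists>k\<in>set ks. \<not> small k"
    using x u0 unfolding rindep_def by auto
  obtain c ks' where cks: "ks = c # ks'" using ks(2) by (cases ks) auto
  have c: "c \<in> K" "c \<in> carrier R" "vge c 0" using ks cks K_carr by auto
  have ks'c: "set ks' \<subseteq> carrier R" "set ks' \<subseteq> K" using ks cks K_carr by auto
  define t where "t = combine ks' us0"
  have tc: "t \<in> carrier R" unfolding t_def using ks'c u0c by simp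
  have tot: "small (c \<otimes> x \<oplus> t)" using ks(4) cks unfolding t_def by simp
  have cns: "\<not> small c"
  proof
    assume sc: "small c"
    have "small (c \<otimes> x)" using small_mult[OF c(2) xc sc x(2)] .
    moreover have "t = (c \<otimes> x \<oplus> t) \<ominus> c \<otimes> x" using c xc tc by algebra
    ultimately have "small t" using small_sub[of "c \<otimes> x \<oplus> t" "c \<otimes> x"] tot c xc tc by simp
    then have "\<forall>k\<in>set ks'. small k" using us0(1) ks'c ks cks unfolding rindep_def t_def by auto
    then show False using ks(5) sc cks by auto
  qed
  then have c0: "c \<noteq> \<zero>" "v c = 0" using c(3) unfolding small_def vge_def by auto
  note ic = inv_nz[OF c(2) c0(1)]
  have icv: "v (inv c) = 0" using v_inv[OF c(2) c0(1)] c0 by simp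
  have icK: "inv c \<in> K" using subfield_m_inv(1)[OF subK] c c0 by auto
  define ks2 where "ks2 = map (\<lambda>k. \<ominus> (inv c \<otimes> k)) ks'"
  have ks2K: "set ks2 \<subseteq> K" unfolding ks2_def using ks'c icK subfield_props(4,6)[OF subK] by auto
  have ks2c: "set ks2 \<subseteq> carrier R" using ks2K K_carr by auto
  have ks2i: "\<forall>k\<in>set ks2. vge k 0"
  proof
    fix k assume "k \<in> set ks2"
    then obtain k' where k': "k' \<in> set ks'" "k = \<ominus> (inv c \<otimes> k')" unfolding ks2_def by auto
    have "vge k' 0" using k' ks cks by auto
    then have "vge (inv c \<otimes> k') 0" using vge_mult[of "inv c" k' 0 0] ic icv k' ks'c unfolding vge_def by auto
    then show "vge k 0" using k' vge_neg ic ks'c by auto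
  qed
  have c2: "combine ks2 us0 = \<ominus> (inv c \<otimes> t)" unfolding ks2_def t_def
    using combine_neg_scale[OF ks'c(1) u0c, of "inv c"] ic by simp
  have "x \<ominus> combine ks2 us0 = inv c \<otimes> (c \<otimes> x \<oplus> t)"
  proof -
    have "x \<ominus> combine ks2 us0 = x \<oplus> inv c \<otimes> t" using c2 xc tc ic by (simp add: minus_eq r_neg)
    also have "\<dots> = (inv c \<otimes> c) \<otimes> x \<oplus> inv c \<otimes> t" using ic xc by simp
    also have "\<dots> = inv c \<otimes> (c \<otimes> x \<oplus> t)" using ic[THEN conjunct1] xc tc c by algebra
    finally show ?thesis .
  qed
  then have sm1: "small (x \<ominus> combine ks2 us0)"
    using small_mult[of "c \<otimes> x \<oplus> t" "inv c"] tot ic xc tc c icv by (simp add: m_comm vge_def)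
  define phi where "phi = (\<lambda>k. SOME s. s \<in> Fres \<and> small (k \<ominus> s))"
  have phi: "phi k \<in> Fres \<and> small (k \<ominus> phi k)" if "k \<in> K" "vge k 0" for k
    unfolding phi_def using Fres that by (metis (mono_tags, lifting) someI_ex)
  define ss where "ss = map phi ks2"
  have ssF: "set ss \<subseteq> Fres" unfolding ss_def using phi ks2K ks2i by auto
  have ssc: "set ss \<subseteq> carrier R" using ssF Fres K_carr by auto
  have sm2: "small (combine ks2 us0 \<ominus> combine ss us0)" unfolding ss_def
    using combine_close[OF ks2c u0c u0(2), of phi] phi ks2K ks2i Fres K_carr by blast
  have "small (x \<ominus> combine ss us0)"
    using small_trans[OF xc _ _ sm1 sm2] ks2c ssc u0c by simp
  moreover have "length ss = length us0" unfolding ss_def ks2_def using ks(2) cks by simp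
  ultimately show ?thesis using ssF by blast
qed

lemma unit_power_small: assumes u: "u \<in> L" "u \<noteq> \<zero>" "v u = 0"
  shows "\<exists>N::nat. N > 0 \<and> small (u [^] N \<ominus> \<one>)"
proof -
  have uc: "u \<in> carrier R" using u Lp(1) by auto
  define Sset where "Sset = {ss. set ss \<subseteq> Fres \<and> length ss = length us0}"
  have Sfin: "finite Sset" unfolding Sset_def using Fres finite_lists_length_eq by blast
  define B where "B = card Sset"
  define phi where "phi = (\<lambda>j::nat. SOME ss. ss \<in> Sset \<and> small (u [^] j \<ominus> combine ss us0))"
  have upow: "u [^] j \<in> L" "vge (u [^] j) 0" "u [^] j \<in> carrier R" "u [^] j \<noteq> \<zero>" "v (u [^] j) = 0" for j :: nat
    using Lp(9)[OF u(1)] vge0_pow[OF uc] u v_pow[OF uc u(2)] pow_nz[OF uc u(2)] uc unfolding vge_def by auto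
  have phi: "phi j \<in> Sset \<and> small (u [^] j \<ominus> combine (phi j) us0)" for j
  proof -
    have "\<exists>ss. ss \<in> Sset \<and> small (u [^] j \<ominus> combine ss us0)"
      using res_repr[OF upow(1,2)] unfolding Sset_def by blast
    then show ?thesis unfolding phi_def by (rule someI_ex)
  qed
  have "\<not> inj_on phi {0..B}"
  proof
    assume "inj_on phi {0..B}"
    moreover have "phi ` {0..B} \<subseteq> Sset" using phi by auto
    ultimately have "card {0..B} \<le> card Sset" using card_inj_on_le Sfin by blast
    then show False unfolding B_def by simp
  qed
  then obtain i j where ij: "i \<in> {0..B}" "j \<in> {0..B}" "i \<noteq> j" "phi i = phi j" unfolding inj_on_def by blast
  have gen: "\<exists>N::nat. N > 0 \<and> small (u [^] N \<ominus> \<one>)" if ab: "a < b" "phi a = phi b" for a b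
  proof -
    have u0c: "set us0 \<subseteq> carrier R" using us0(1) Lp(1) unfolding rindep_def by auto
    have cc: "combine (phi a) us0 \<in> carrier R" using phi[of a] u0c Fres K_carr unfolding Sset_def by auto
    have "small (u [^] a \<ominus> combine (phi a) us0)" "small (combine (phi a) us0 \<ominus> u [^] b)"
      using phi[of a] phi[of b] ab small_swap[OF upow(3) cc] by auto
    then have sab: "small (u [^] a \<ominus> u [^] b)" using small_trans[OF upow(3) cc upow(3)] by blast
    have ub: "u [^] b = u [^] a \<otimes> u [^] (b - a)" using ab uc by (simp add: nat_pow_mult)
    have cpa: "u [^] a \<in> carrier R" "u [^] (b - a) \<in> carrier R" using uc by auto
    have "u [^] a \<ominus> u [^] b = (\<one> \<ominus> u [^] (b - a)) \<otimes> u [^] a" unfolding ub using cpa by algebra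
    then have "small ((\<one> \<ominus> u [^] (b - a)) \<otimes> u [^] a)" using sab by simp
    moreover have "vge (inv (u [^] a)) 0" using v_inv[OF upow(3,4)] upow(5) unfolding vge_def by simp
    ultimately have "small (((\<one> \<ominus> u [^] (b - a)) \<otimes> u [^] a) \<otimes> inv (u [^] a))"
      using small_mult inv_nz[OF upow(3,4)] uc by simp
    moreover have "((\<one> \<ominus> u [^] (b - a)) \<otimes> u [^] a) \<otimes> inv (u [^] a) = \<one> \<ominus> u [^] (b - a)"
      using inv_nz[OF upow(3,4)] uc by (simp add: m_assoc)
    ultimately have "small (\<one> \<ominus> u [^] (b - a))" by simp
    then have "small (u [^] (b - a) \<ominus> \<one>)" using small_swap uc by simp
    then show ?thesis using ab by (intro exI[of _ "b - a"]) auto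
  qed
  show ?thesis
  proof (cases "i < j")
    case True then show ?thesis using gen ij by blast
  next
    case False then have "j < i" using ij by simp
    then show ?thesis using gen ij by metis
  qed
qed

lemma unit_power_small_coprime: assumes u: "u \<in> L" "u \<noteq> \<zero>" "v u = 0"
  shows "\<exists>N::nat. N > 0 \<and> \<not> p dvd N \<and> small (u [^] N \<ominus> \<one>)"
proof -
  have uc: "u \<in> carrier R" using u Lp(1) by auto
  obtain N :: nat where N: "N > 0" "small (u [^] N \<ominus> \<one>)" using unit_power_small[OF u] by blast
  have split: "\<exists>r N'. N = p ^ r * N' \<and> \<not> p dvd N'" if "N > 0" for N :: nat
    using that
  proof (induct N rule: less_induct)
    case (less N)
    show ?case
    proof (cases "p dvd N")
      case True
      then obtain N1 where N1: "N = p * N1" by auto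
      have "N1 < N" "N1 > 0" using N1 less.prems p_gt1 by auto
      then obtain r N' where "N1 = p ^ r * N'" "\<not> p dvd N'" using less.hyps by blast
      then show ?thesis using N1 by (intro exI[of _ "Suc r"] exI[of _ N']) auto
    next
      case False then show ?thesis by (intro exI[of _ 0] exI[of _ N]) auto
    qed
  qed
  obtain r N' where rN: "N = p ^ r * N'" "\<not> p dvd N'" using split[OF N(1)] by blast
  have N'0: "N' > 0" using rN N(1) by (cases N') auto
  have "u [^] N \<ominus> \<one> = (u [^] N') [^] (p ^ r) \<ominus> \<one> [^] (p ^ r)"
    using uc rN by (simp add: nat_pow_pow mult.commute)
  also have "\<dots> = (u [^] N' \<ominus> \<one>) [^] (p ^ r)" using frob_pow_minus[of "u [^] N'" \<one> r] uc by simp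
  finally have "small ((u [^] N' \<ominus> \<one>) [^] (p ^ r))" using N(2) by simp
  then have "small (u [^] N' \<ominus> \<one>)" using small_pow_root[of "u [^] N' \<ominus> \<one>" "p ^ r"] uc p_gt1 by simp
  then show ?thesis using N'0 rN(2) by blast
qed


subsection \<open>m-th roots of units up to roots of unity\<close>

lemma Lcomplete: "vcomplete R v L" using finite_ext_complete[OF L] .

lemma unit_root:
  assumes u: "u \<in> L" "u \<noteq> \<zero>" "v u = 0" and m: "m > 0" "\<not> p dvd m"
  shows "\<exists>c\<in>L. c \<noteq> \<zero> \<and> root_of_unity R (c [^] m \<otimes> inv u)"
proof -
  have uc: "u \<in> carrier R" using u Lp(1) by auto
  obtain N :: nat where N: "N > 0" "\<not> p dvd N" "small (u [^] N \<ominus> \<one>)"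
    using unit_power_small_coprime[OF u] by blast
  have "coprime p N" "coprime p m" using prime_imp_coprime[OF primep] N(2) m(2) by auto
  then have cop: "coprime p (N * m * m)" by (simp add: coprime_mult_right_iff)
  obtain f where f: "f > 0" "(N * m * m) dvd (p ^ f - 1)" using exists_pow_cong1[OF cop] N(1) m(1) p_gt1 by auto
  define q where "q = p ^ f"
  have "p \<le> p ^ f" using f(1) p_gt1 by (simp add: self_le_power)
  then have q: "q \<ge> 2" unfolding q_def using p_gt1 by linarith
  obtain t0 where t0: "q - 1 = N * m * m * t0" using f(2) unfolding q_def by blast
  define g where "g = N * m * t0"
  have gm: "g * m = q - 1" unfolding g_def using t0 by simp
  have Ng: "N dvd g" unfolding g_def by simp
  define z where "z = inv u"
  have z: "z \<in> L" "z \<in> carrier R" "z \<noteq> \<zero>" "v z = 0" unfolding z_def using inv_nz[OF uc u(2)] v_inv[OF uc u(2)] u Lp(8) by auto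
  have zi: "vge z 0" using z unfolding vge_def by simp
  have zN: "small (z [^] N \<ominus> \<one>)"
  proof -
    have uN: "u [^] N \<in> carrier R" "u [^] N \<noteq> \<zero>" using uc u pow_nz by auto
    have "u [^] N \<otimes> z [^] N = (u \<otimes> z) [^] N" using uc z by (simp add: nat_pow_distrib)
    also have "u \<otimes> z = \<one>" unfolding z_def using inv_nz[OF uc u(2)] by simp
    finally have "u [^] N \<otimes> z [^] N = \<one>" by simp
    then have e: "z [^] N = inv (u [^] N)" using comm_inv_char[of "u [^] N" "z [^] N"] uc z by simp
    note iN = inv_nz[OF uN]
    have "z [^] N \<ominus> \<one> = (\<one> \<ominus> u [^] N) \<otimes> inv (u [^] N)"
    proof -
      have "(\<one> \<ominus> u [^] N) \<otimes> inv (u [^] N) = inv (u [^] N) \<ominus> (inv (u [^] N) \<otimes> u [^] N)"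
        using uN iN[THEN conjunct1] by algebra
      then show ?thesis using e iN by simp
    qed
    moreover have "small (\<one> \<ominus> u [^] N)" using small_swap[of "u [^] N" \<one>] N(3) uN by simp
    moreover have "vge (inv (u [^] N)) 0" using v_inv[OF uN] v_pow[OF uc u(2)] u(3) unfolding vge_def by simp
    ultimately show ?thesis using small_mult iN uN by simp
  qed
  define w where "w = z [^] g"
  have w: "w \<in> L" "w \<in> carrier R" "w \<noteq> \<zero>" "v w = 0" unfolding w_def
    using z Lp(9) pow_nz v_pow by auto
  have wi: "vge w 0" using w unfolding vge_def by simp
  have w1: "small (w \<ominus> \<one>)"
  proof -
    obtain h where h: "g = N * h" using Ng by blast
    have "w = (z [^] N) [^] h" unfolding w_def h using z by (simp add: nat_pow_pow)
    then show ?thesis using small_pow_one[of "z [^] N" h] zN z vge0_pow[OF z(2) zi] by simp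
  qed
  obtain dl where dl: "dl > 0" "vge (w \<ominus> \<one>) dl"
  proof (cases "w \<ominus> \<one> = \<zero>")
    case True then show ?thesis using that[of 1] by simp
  next
    case False then show ?thesis using that[of "v (w \<ominus> \<one>)"] w1 unfolding small_def vge_def by auto
  qed
  define cs where "cs = cseq w q"
  have cs: "cs t \<in> L" "cs t \<in> carrier R" "cs t \<noteq> \<zero>" "v (cs t) = 0" for t
  proof (induct t)
    case 0 show "cs 0 \<in> L" "cs 0 \<in> carrier R" "cs 0 \<noteq> \<zero>" "v (cs 0) = 0" unfolding cs_def using Lp(3) v_one by auto
  next
    case (Suc t)
    have wq: "w [^] (q ^ t) \<in> carrier R" "w [^] (q ^ t) \<noteq> \<zero>" "v (w [^] (q ^ t)) = 0" "w [^] (q ^ t) \<in> L"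
      using w pow_nz v_pow Lp(9) by auto
    show "cs (Suc t) \<in> L" "cs (Suc t) \<in> carrier R" "cs (Suc t) \<noteq> \<zero>" "v (cs (Suc t)) = 0"
      unfolding cs_def using Suc[unfolded cs_def] wq Lp(4) nz_mult vmult by auto
  qed
  have csi: "vge (cs t) 0" for t using cs unfolding vge_def by simp
  have Dform: "cs t [^] m \<otimes> z = z [^] (q ^ t)" for t
  proof (induct t)
    case 0 show ?case unfolding cs_def using z by simp
  next
    case (Suc t)
    have "cs (Suc t) [^] m \<otimes> z = (cs t [^] m \<otimes> z) \<otimes> (w [^] (q ^ t)) [^] m"
      unfolding cs_def using cs[of t] w z by (simp add: nat_pow_distrib m_ac cs_def)
    also have "\<dots> = z [^] (q ^ t) \<otimes> z [^] (g * q ^ t * m)"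
      using Suc z unfolding w_def by (simp add: nat_pow_pow)
    also have "\<dots> = z [^] (q ^ t + g * m * q ^ t)" using z by (simp add: nat_pow_mult mult.commute mult.left_commute mult.assoc)
    also have "q ^ t + g * m * q ^ t = q ^ Suc t" using gm q by (simp add: algebra_simps)
    finally show ?case .
  qed
  have step: "vge (cs (Suc t) \<ominus> cs t) (real t * dl)" for t
  proof -
    have qt: "q ^ t = p ^ (f * t)" unfolding q_def by (simp add: power_mult)
    have e: "cs (Suc t) \<ominus> cs t = cs t \<otimes> (w \<ominus> \<one>) [^] (q ^ t)"
    proof -
      have "(w \<ominus> \<one>) [^] (q ^ t) = w [^] (q ^ t) \<ominus> \<one>" unfolding qt using frob_pow_minus[of w \<one>] w by simp
      moreover have "cs t \<otimes> (w [^] (q ^ t) \<ominus> \<one>) = cs t \<otimes> w [^] (q ^ t) \<ominus> cs t"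
        using cs(2)[of t] nat_pow_closed[OF w(2), of "q ^ t"] by algebra
      ultimately show ?thesis unfolding cs_def by simp
    qed
    have "real t \<le> real (q ^ t)"
    proof -
      have "t < 2 ^ t" by (rule less_exp)
      also have "\<dots> \<le> q ^ t" using q by (simp add: power_mono)
      finally show ?thesis by simp
    qed
    have "vge ((w \<ominus> \<one>) [^] (q ^ t)) (real (q ^ t) * dl)" using vge_pow[of "w \<ominus> \<one>" dl "q ^ t"] w dl q by simp
    then have "vge ((w \<ominus> \<one>) [^] (q ^ t)) (real t * dl)"
      using vge_mono \<open>real t \<le> real (q ^ t)\<close> dl(1) by (meson mult_right_mono less_imp_le)
    then have "vge (cs t \<otimes> (w \<ominus> \<one>) [^] (q ^ t)) (0 + real t * dl)"
      using vge_mult[of "cs t" "(w \<ominus> \<one>) [^] (q ^ t)" 0 "real t * dl"] cs csi w by simp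
    then show ?thesis using e by simp
  qed
  have tail: "vge (cs j \<ominus> cs l) (real l * dl)" if "l \<le> j" for l j
    using that
  proof (induct j)
    case 0 then show ?case using minus_self[OF cs(2)[of 0]] by simp
  next
    case (Suc j)
    show ?case
    proof (cases "l = Suc j")
      case True then show ?thesis using minus_self[OF cs(2)[of l]] by simp
    next
      case False
      then have lj: "l \<le> j" using Suc.prems by simp
      have a: "vge (cs j \<ominus> cs l) (real l * dl)" using Suc.hyps lj by simp
      have b: "vge (cs (Suc j) \<ominus> cs j) (real l * dl)"
        using vge_mono[OF step[of j]] lj dl(1) by (simp add: mult_right_mono)
      show ?thesis using vge_trans[OF cs(2) cs(2) cs(2) b a] .
    qed
  qed
  have "vcauchy R v cs"
    unfolding cauchy_iff[of cs, OF cs(2)]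
  proof
    fix M
    obtain T :: nat where T: "M / dl \<le> real T" using real_nat_ceiling_ge by blast
    have TM: "M \<le> real T * dl" using T dl(1) by (simp add: field_simps)
    have "\<forall>a\<ge>T. \<forall>b\<ge>T. vge (cs a \<ominus> cs b) M"
    proof (intro allI impI)
      fix a b assume ab: "a \<ge> T" "b \<ge> T"
      show "vge (cs a \<ominus> cs b) M"
      proof (cases "b \<le> a")
        case True
        have "vge (cs a \<ominus> cs b) (real b * dl)" using tail[OF True] .
        then show ?thesis using vge_mono TM ab dl(1) by (smt (verit) mult_right_mono of_nat_le_iff)
      next
        case False
        then have "vge (cs b \<ominus> cs a) (real a * dl)" using tail by simp
        then have "vge (cs a \<ominus> cs b) (real a * dl)" using vge_swap cs by blast
        then show ?thesis using vge_mono TM ab dl(1) by (smt (verit) mult_right_mono of_nat_le_iff)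
      qed
    qed
    then show "\<exists>N. \<forall>a\<ge>N. \<forall>b\<ge>N. vge (cs a \<ominus> cs b) M" by blast
  qed
  then obtain c where c: "c \<in> L" "vconverges R v cs c" using Lcomplete cs(1) unfolding vcomplete_def by blast
  have cc: "c \<in> carrier R" using c Lp(1) by auto
  have c0: "c \<noteq> \<zero> \<and> v c = 0"
  proof -
    obtain T where T: "\<And>n. n \<ge> T \<Longrightarrow> vge (cs n \<ominus> c) 1" using c(2) conv_iff[of cs c, OF cs(2) cc] by blast
    have a: "vge (cs T \<ominus> c) 1" using T by simp
    have e: "c = cs T \<oplus> \<ominus> (cs T \<ominus> c)" using cs(2)[of T] cc by algebra
    show ?thesis
    proof (cases "cs T \<ominus> c = \<zero>")
      case True then have "c = cs T" using cs(2)[of T] cc r_right_minus_eq by blast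
      then show ?thesis using cs by simp
    next
      case False
      have "v (\<ominus> (cs T \<ominus> c)) \<ge> 1" using a False v_neg[of "cs T \<ominus> c"] cs(2)[of T] cc unfolding vge_def by simp
      then have "v (cs T) < v (\<ominus> (cs T \<ominus> c))" using cs(4) by simp
      then show ?thesis using v_strict[of "cs T" "\<ominus> (cs T \<ominus> c)"] cs(2)[of T] cs(3)[of T] cs(4)[of T] cc False e
        by (metis a_inv_closed add.inv_eq_1_iff minus_closed)
    qed
  qed
  have ci: "vge c 0" using c0 unfolding vge_def by simp
  define Ds where "Ds = (\<lambda>t. cs t [^] m \<otimes> z)"
  define D where "D = c [^] m \<otimes> z"
  have Dc: "D \<in> carrier R" unfolding D_def using cc z by simp
  have Dsc: "\<And>t. Ds t \<in> carrier R" unfolding Ds_def using cs z by simp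
  have Dsi: "\<And>t. vge (Ds t) 0" unfolding Ds_def using Dform vge0_pow[OF z(2) zi] by simp
  have Di: "vge D 0" unfolding D_def using vge0_mult[of "c [^] m" z] vge0_pow[OF cc ci] cc z zi by simp
  have conv1: "vconverges R v (\<lambda>t. cs t [^] m) (c [^] m)" using conv_pow[of cs c, OF cs(2) csi cc ci c(2)] .
  have conv2: "vconverges R v Ds D"
  proof -
    have "vconverges R v (\<lambda>t. z \<otimes> cs t [^] m) (z \<otimes> c [^] m)"
      using conv_cmult[of "\<lambda>t. cs t [^] m" "c [^] m" z, OF _ _ z(2) conv1] cs cc by simp
    moreover have "(\<lambda>t. z \<otimes> cs t [^] m) = Ds" unfolding Ds_def using cs z by (simp add: m_comm)
    moreover have "z \<otimes> c [^] m = D" unfolding D_def using cc z by (simp add: m_comm)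
    ultimately show ?thesis by simp
  qed
  have convA: "vconverges R v (\<lambda>t. Ds (Suc t)) D" using conv_shift[OF Dsc Dc conv2] .
  have DsS: "Ds (Suc t) = Ds t [^] q" for t
    unfolding Ds_def Dform using z by (simp add: nat_pow_pow mult.commute)
  have convB: "vconverges R v (\<lambda>t. Ds (Suc t)) (D [^] q)"
    using conv_pow[of Ds D q, OF Dsc Dsi Dc Di conv2] DsS by simp
  have DD: "D [^] q = D" using conv_unique[OF _ Dc _ convA convB] Dsc Dc by simp
  have D0: "D \<noteq> \<zero>" unfolding D_def using c0 cc z pow_nz nz_mult by simp
  have "D [^] (q - 1) = \<one>"
  proof -
    have "D [^] (q - 1) \<otimes> D = D [^] q" using Dc q by (simp add: nat_pow_Suc[symmetric])
    then have "D [^] (q - 1) \<otimes> D = \<one> \<otimes> D" using DD Dc by simp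
    then show ?thesis using D0 Dc m_rcancel by (metis nat_pow_closed one_closed)
  qed
  then have "root_of_unity R D" unfolding root_of_unity_def using Dc q by (intro conjI exI[of _ "q - 1"]) auto
  moreover have "D = c [^] m \<otimes> inv u" unfolding D_def z_def ..
  ultimately show ?thesis using c(1) c0 by blast
qed


lemma main:
  assumes a: "a \<in> K" "a \<noteq> \<zero>" and n: "n > 0"
    and val: "\<exists>k::int. vL R v L a = real n * real_of_int k"
  shows "\<exists>L1. purely_insep_finite_ext R p L L1 \<and>
           (\<exists>b \<in> L1 - {\<zero>}. pos_class R (b [^] n) = pos_class R a)"
proof -
  have ac: "a \<in> carrier R" "a \<in> L" using a K_carr KL by auto
  obtain k :: int where k: "vL R v L a = real n * real_of_int k" using val by blast
  define e where "e = ram_index R v L"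
  have e: "e > 0" "GL = {real_of_int k / real e | k. True}" using ram_index_L unfolding e_def by auto
  have "real e * v a = real n * real_of_int k" using k unfolding vL_def e_def by simp
  then have "v a / real n = real_of_int k / real e" using e(1) n by (simp add: field_simps)
  then have "v a / real n \<in> GL" using e(2) by auto
  then obtain pi where "pi \<in> L - {\<zero>}" "v a / real n = v pi" unfolding GL_def by (metis imageE)
  then have pi: "pi \<in> L" "pi \<noteq> \<zero>" "v pi = v a / real n" by auto
  have pic: "pi \<in> carrier R" using pi Lp(1) by auto
  have pin: "pi [^] n \<in> carrier R" "pi [^] n \<noteq> \<zero>" "pi [^] n \<in> L" using pic pi pow_nz Lp(9) by auto
  note ipn = inv_nz[OF pin(1,2)]
  define u where "u = a \<otimes> inv (pi [^] n)"
  have u: "u \<in> L" "u \<noteq> \<zero>" "v u = 0"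
  proof -
    show "u \<in> L" unfolding u_def using ac pin Lp(4,8) by auto
    show "u \<noteq> \<zero>" unfolding u_def using ac a(2) ipn nz_mult by auto
    have "v u = v a + v (inv (pi [^] n))" unfolding u_def using vmult ac a(2) ipn by auto
    also have "\<dots> = v a - real n * v pi" using v_inv[OF pin(1,2)] v_pow[OF pic pi(2)] by simp
    also have "\<dots> = 0" using pi(3) n by simp
    finally show "v u = 0" .
  qed
  have uc: "u \<in> carrier R" using u Lp(1) by auto
  obtain s m where sm: "n = p ^ s * m" "\<not> p dvd m" using pfactor[OF n p_gt1] by blast
  have m: "m > 0" using sm n by (cases m) auto
  obtain c where c: "c \<in> L" "c \<noteq> \<zero>" "root_of_unity R (c [^] m \<otimes> inv u)" using unit_root[OF u m sm(2)] by blast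
  have cc: "c \<in> carrier R" using c Lp(1) by auto
  have ps: "p ^ s > 0" using p_gt1 by simp
  obtain b0 where b0: "b0 \<in> carrier R" "b0 [^] (p ^ s) = c" using pth_root[OF cc ps] by blast
  have b00: "b0 \<noteq> \<zero>" using b0 c(2) ps by (metis nat_pow_zero less_not_refl2)
  define P where "P = monom \<one> (p ^ s - 1) @ [\<ominus> c]"
  have PL: "P \<in> carrier (L[X])"
    unfolding univ_poly_def polynomial_def P_def monom_def using c Lp(2,3,6) by auto
  have evP: "eval P b0 = \<zero>"
  proof -
    have "eval P b0 = eval (monom \<one> (p ^ s - 1)) b0 \<otimes> b0 \<oplus> \<ominus> c"
      unfolding P_def by (rule eval_append_aux) (use b0 cc in \<open>auto simp: monom_def\<close>)
    also have "\<dots> = b0 [^] (p ^ s - 1) \<otimes> b0 \<oplus> \<ominus> c" using eval_monom[of \<one> b0 "p ^ s - 1"] b0 by simp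
    also have "b0 [^] (p ^ s - 1) \<otimes> b0 = b0 [^] (p ^ s)" using ps b0 by (metis Suc_diff_1 nat_pow_Suc)
    finally show ?thesis using b0 cc by (simp add: r_neg)
  qed
  have alg: "(algebraic over L) b0"
    using algebraicI[OF PL _ evP] unfolding P_def by simp
  define L1 where "L1 = simple_extension L b0"
  have L1sub: "subfield L1 R" unfolding L1_def using simple_extension_is_subfield[OF subL b0(1)] alg by simp
  have L1fd: "finite_dimension L L1" unfolding L1_def using finite_dimension_simple_extension[OF subL b0(1)] alg by simp
  have LL1: "L \<subseteq> L1" unfolding L1_def using simple_extension_incl[OF Lp(1) b0(1)] .
  have b0L1: "b0 \<in> L1" unfolding L1_def using simple_extension_mem[OF subfieldE(1)[OF subL] b0(1)] .
  have L1c: "L1 \<subseteq> carrier R" unfolding L1_def using simple_extension_in_carrier[OF Lp(1) b0(1)] .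
  have insep: "x [^] (p ^ s) \<in> L" if x: "x \<in> L1" for x
    using x[unfolded L1_def]
  proof (induct x rule: simple_extension.induct)
    case zero then show ?case using Lp(2) ps by (simp add: nat_pow_zero)
  next
    case (lin k1 k2)
    have k1c: "k1 \<in> carrier R" using lin(1) simple_extension_in_carrier[OF Lp(1) b0(1)] by auto
    have k2c: "k2 \<in> carrier R" using lin(3) Lp(1) by auto
    have "(k1 \<otimes> b0 \<oplus> k2) [^] (p ^ s) = (k1 \<otimes> b0) [^] (p ^ s) \<oplus> k2 [^] (p ^ s)"
      using frob_pow[of "k1 \<otimes> b0" k2 s] k1c k2c b0 by simp
    also have "(k1 \<otimes> b0) [^] (p ^ s) = k1 [^] (p ^ s) \<otimes> c" using b0 k1c by (simp add: nat_pow_distrib)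
    finally show ?case using lin(2) lin(3) c(1) Lp(4,5,9) by simp
  qed
  have pi_ext: "purely_insep_finite_ext R p L L1"
    unfolding purely_insep_finite_ext_def finite_ext_def using L1sub LL1 L1fd insep by blast
  define b where "b = pi \<otimes> b0"
  have bL1: "b \<in> L1" unfolding b_def using pi(1) LL1 b0L1 subfield_props(4)[OF L1sub] by auto
  have b0': "b \<noteq> \<zero>" unfolding b_def using pic pi(2) b0 b00 nz_mult by auto
  define z where "z = c [^] m \<otimes> inv u"
  have zc: "z \<in> carrier R" unfolding z_def using cc inv_nz[OF uc u(2)] by simp
  have "b [^] n = pi [^] n \<otimes> c [^] m"
  proof -
    have "b [^] n = pi [^] n \<otimes> b0 [^] n" unfolding b_def using pic b0 by (simp add: nat_pow_distrib)
    also have "b0 [^] n = c [^] m" using b0 sm(1) nat_pow_pow[of b0 "p ^ s" m] by simp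
    finally show ?thesis .
  qed
  also have "c [^] m = u \<otimes> z"
  proof -
    have "u \<otimes> z = (u \<otimes> inv u) \<otimes> c [^] m" unfolding z_def using uc cc inv_nz[OF uc u(2), THEN conjunct1] by (simp add: m_ac)
    then show ?thesis using inv_nz[OF uc u(2)] cc by simp
  qed
  also have "pi [^] n \<otimes> (u \<otimes> z) = a \<otimes> z"
  proof -
    have "pi [^] n \<otimes> (u \<otimes> z) = (pi [^] n \<otimes> inv (pi [^] n)) \<otimes> a \<otimes> z" unfolding u_def
      using pin ipn ac zc by (simp add: m_ac)
    then show ?thesis using ipn ac zc by simp
  qed
  finally have bn: "b [^] n = a \<otimes> z" .
  have "pos_class R (b [^] n) = pos_class R a" unfolding bn using pos_class_ru[OF ac(1) a(2)] c(3) unfolding z_def by simp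
  then show ?thesis using pi_ext bL1 b0' by blast
qed

end

end

theorem lemma2p3:
  fixes R :: "('a, 'b) ring_scheme" and v :: "'a \<Rightarrow> real" and p :: nat
    and K L :: "'a set" and n :: nat and a :: 'a
  assumes cp: "CP_setup R v p K"
    and L: "finite_ext R K L"
    and n: "n > 0"
    and a: "a \<in> K" "a \<noteq> \<zero>\<^bsub>R\<^esub>"
    and val: "\<exists>k::int. vL R v L a = real n * real_of_int k"
  shows "\<exists>L1. purely_insep_finite_ext R p L L1 \<and>
           (\<exists>b \<in> L1 - {\<zero>\<^bsub>R\<^esub>}. pos_class R (b [^]\<^bsub>R\<^esub> n) = pos_class R a)"
proof -
  have f: "field R" using cp unfolding CP_setup_def by auto
  interpret cpl R v p K by (rule cpl.intro[OF f]) (rule cpl_axioms.intro[OF cp])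
  show ?thesis using main[OF L a n val] .
qed

end
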